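(* Let $(S,\mathcal B_S,\mu)$ be a standard Lebesgue space with $\sigma$-finite measure $\mu$, and $f,g:S\to[0,\infty)$ measurable with $\int_S f\,d\mu=\int_S g\,d\mu=1$. Let $(X,Y)$ satisfy \[ \mathbb P(X\le x,Y\le y)=\exp\Big\{-\int_S \max\Big(\frac{f(s)}{x},\frac{g(s)}{y}\Big)\mu(ds)\Big\},\qquad x,y>0, \] and let $(X_i,Y_i)$, $i\ge1$, be i.i.d. copies. Let $D_t=\{s:f(s)\le t g(s)\}$, $E_t=S\setminus D_t$, and suppose $\mu(E_t)>0$ and $\mu(D_t)>0$ for all $t\in(0,\infty)$. Define \[ \gamma_+(t)=\frac1t\int_S f\,\mathbf 1_{\{f>tg\}}\,d\mu,\qquad \gamma_-(t)=\frac1t\int_S g\,\mathbf 1_{\{g>tf\}}\,d\mu. \] Then $\gamma_+\in RV_{-\alpha_+}$ and $\gamma_-\in RV_{-\alpha_-}$ for some $\alpha_+>0,\alpha_->0$ if and only if \[ \Big(\frac1{\kappa_n^+}\max_{1\le i\le n}\frac{X_i}{Y_i},\;\frac1{\kappa_n^-}\max_{1\le i\le n}\frac{Y_i}{X_i}\Big)\Rightarrow(\zeta_{\alpha_+},\zeta_{\alpha_-}), \] where $\kappa_n^\pm\sim(1/\gamma_\pm)^{\leftarrow}(n)$ and $\zeta_{\alpha_+},\zeta_{\alpha_-}$ are independent standard $\alpha_+$- and $\alpha_-$-Fréchet random variables (when $\alpha_+=\alpha_-=\alpha$, they are two independent standard $\alpha$-Fréchet random variables).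
   Context: $RV_{-\rho}$: $U(tx)/U(t)\to x^{-\rho}$ for all $x>0$. $U^{\leftarrow}(y)=\inf\{s:U(s)\ge y\}$. Standard $\alpha$-Fréchet: $\mathbb P(\zeta_\alpha\le t)=\exp(-t^{-\alpha})$, $t>0$. Convention $1/0=\infty$. *)

theory Defs
  imports "HOL-Probability.Probability" "HOL-Library.Landau_Symbols"
begin

text \<open>Regular variation: U is in RV with index r iff U(tx)/U(t) tends to x powr r
  as t tends to infinity, for every x > 0. (So U in RV_{-rho} is regvar U (-rho).)\<close>
definition regvar :: "(real \<Rightarrow> real) \<Rightarrow> real \<Rightarrow> bool" where
  "regvar U r \<longleftrightarrow> (\<forall>x>0. ((\<lambda>t. U (t * x) / U t) \<longlongrightarrow> x powr r) at_top)"

definition geninv :: "(real \<Rightarrow> real) \<Rightarrow> real \<Rightarrow> real" where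
  "geninv U y = Inf {s. 0 < s \<and> U s \<ge> y}"

definition frechet_cdf :: "real \<Rightarrow> real \<Rightarrow> real" where
  "frechet_cdf a t = (if t > 0 then exp (- (t powr (- a))) else 0)"

definition frechet :: "real \<Rightarrow> real measure" where
  "frechet a = interval_measure (frechet_cdf a)"

definition weak_conv :: "(nat \<Rightarrow> 'a::topological_space measure) \<Rightarrow> 'a measure \<Rightarrow> bool" where
  "weak_conv Ms L \<longleftrightarrow>
     (\<forall>h :: 'a \<Rightarrow> real. continuous_on UNIV h \<longrightarrow> bounded (range h) \<longrightarrow>
        (\<lambda>n. \<integral>z. h z \<partial>(Ms n)) \<longlonglongrightarrow> (\<integral>z. h z \<partial>L))"

definition gamma_plus :: "'a measure \<Rightarrow> ('a \<Rightarrow> real) \<Rightarrow> ('a \<Rightarrow> real) \<Rightarrow> real \<Rightarrow> real" where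
  "gamma_plus M f g t = (1 / t) * (\<integral>s. f s * indicator {s. f s > t * g s} s \<partial>M)"

definition gamma_minus :: "'a measure \<Rightarrow> ('a \<Rightarrow> real) \<Rightarrow> ('a \<Rightarrow> real) \<Rightarrow> real \<Rightarrow> real" where
  "gamma_minus M f g t = (1 / t) * (\<integral>s. g s * indicator {s. g s > t * f s} s \<partial>M)"

end

theory Submission
  imports Defs
begin

locale ana =
  fixes M :: "'a measure" and f g :: "'a \<Rightarrow> real"
  assumes f_meas[measurable]: "f \<in> borel_measurable M"
    and g_meas[measurable]: "g \<in> borel_measurable M"
    and f_nn: "\<And>s. f s \<ge> 0" and g_nn: "\<And>s. g s \<ge> 0"
    and f_int: "(\<integral>\<^sup>+ s. ennreal (f s) \<partial>M) = 1"
    and g_int: "(\<integral>\<^sup>+ s. ennreal (g s) \<partial>M) = 1"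
begin

lemma intf[simp]: "integrable M f"
  by (rule integrableI_nonneg) (auto simp: f_nn f_int)
lemma intg[simp]: "integrable M g"
  by (rule integrableI_nonneg) (auto simp: g_nn g_int)
lemma int_f: "(\<integral>s. f s \<partial>M) = 1"
  by (subst integral_eq_nn_integral) (auto simp: f_nn f_int)
lemma int_g: "(\<integral>s. g s \<partial>M) = 1"
  by (subst integral_eq_nn_integral) (auto simp: g_nn g_int)

definition hh :: "real \<Rightarrow> real" where
  "hh t = (\<integral>s. f s * indicator {s. f s > t * g s} s \<partial>M)"

definition CC :: "real \<Rightarrow> real" where
  "CC t = (\<integral>s. max (f s) (t * g s) \<partial>M)"

lemma set_meas[measurable]: "{s \<in> space M. f s > t * g s} \<in> sets M"
  by measurable

lemma int_fi[simp]: "integrable M (\<lambda>s. f s * indicator {s. f s > t * g s} s)"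
  by (rule Bochner_Integration.integrable_bound[OF intf]) (auto simp: f_nn split: split_indicator)

lemma hh_nn: "0 \<le> hh t"
  unfolding hh_def by (rule integral_nonneg_AE) (auto simp: f_nn)

lemma hh_le1: "hh t \<le> 1"
proof -
  have "hh t \<le> (\<integral>s. f s \<partial>M)"
    unfolding hh_def by (rule integral_mono) (auto simp: f_nn split: split_indicator)
  then show ?thesis using int_f by simp
qed

lemma hh_mono: assumes "s \<le> t" shows "hh t \<le> hh s"
  unfolding hh_def
proof (rule integral_mono)
  fix x
  have "s * g x \<le> t * g x" using assms g_nn[of x] by (simp add: mult_right_mono)
  then show "f x * indicator {s. t * g s < f s} x \<le> f x * indicator {sa. s * g sa < f sa} x"
    using f_nn[of x] by (auto split: split_indicator)
qed auto

lemma int_maxfg[simp]: "integrable M (\<lambda>s. max (a * f s) (b * g s))"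
  by auto

lemma CC_bounds: assumes "t > 0" shows "t \<le> CC t" "CC t \<le> 1 + t"
proof -
  have "(\<integral>s. t * g s \<partial>M) \<le> CC t"
    unfolding CC_def by (rule integral_mono) auto
  then show "t \<le> CC t" using int_g by simp
  have "CC t \<le> (\<integral>s. f s + t * g s \<partial>M)"
  proof (unfold CC_def, rule integral_mono)
    fix x have "0 \<le> t * g x" using assms g_nn[of x] by simp
    then show "max (f x) (t * g x) \<le> f x + t * g x" using f_nn[of x] by simp
  qed auto
  then show "CC t \<le> 1 + t" using int_g int_f by simp
qed

lemma diff_lower: assumes "t > 0" "q > 1"
  shows "(1 - 1/q) * hh (q * t) \<le> CC t - (\<integral>s. max (f s / q) (t * g s) \<partial>M)"
proof -
  have "(1 - 1/q) * hh (q * t) = (\<integral>s. (1 - 1/q) * (f s * indicator {s. f s > (q*t) * g s} s) \<partial>M)"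
    unfolding hh_def by simp
  also have "\<dots> \<le> (\<integral>s. max (f s) (t * g s) - max (f s / q) (t * g s) \<partial>M)"
  proof (rule integral_mono)
    fix x
    show "(1 - 1/q) * (f x * indicator {s. f s > (q*t) * g s} x) \<le> max (f x) (t * g x) - max (f x / q) (t * g x)"
    proof (cases "f x > (q*t) * g x")
      case True
      then have "f x / q > t * g x" using assms by (simp add: field_simps)
      moreover have "f x / q \<le> f x" using assms f_nn[of x] mult_right_mono[of 1 q "f x"] by (simp add: field_simps)
      ultimately show ?thesis using True by (simp add: algebra_simps)
    next
      case False
      have "f x / q \<le> f x" using assms f_nn[of x] mult_right_mono[of 1 q "f x"] by (simp add: field_simps)
      then show ?thesis using False by auto
    qed
  qed (auto intro!: integrable_diff)
  also have "\<dots> = CC t - (\<integral>s. max (f s / q) (t * g s) \<partial>M)"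
    unfolding CC_def by (rule Bochner_Integration.integral_diff) auto
  finally show ?thesis .
qed

lemma diff_upper: assumes "t > 0" "q > 1"
  shows "(\<integral>s. max (q * f s) (t * g s) \<partial>M) - CC t \<le> (q - 1) * hh (t / q)"
proof -
  have iu: "integrable M (\<lambda>s. (q - 1) * (f s * indicator {s. f s > (t/q) * g s} s))"
    by (rule integrable_mult_right, rule int_fi)
  have "(\<integral>s. max (q * f s) (t * g s) \<partial>M) - CC t = (\<integral>s. max (q * f s) (t * g s) - max (f s) (t * g s) \<partial>M)"
    unfolding CC_def by (rule Bochner_Integration.integral_diff[symmetric]) auto
  also have "\<dots> \<le> (\<integral>s. (q - 1) * (f s * indicator {s. f s > (t/q) * g s} s) \<partial>M)"
  proof (rule integral_mono[OF _ iu])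
    fix x
    show "max (q * f x) (t * g x) - max (f x) (t * g x) \<le> (q - 1) * (f x * indicator {s. f s > (t/q) * g s} x)"
    proof (cases "f x > (t/q) * g x")
      case True
      have fq: "f x \<le> q * f x" using assms f_nn[of x] mult_right_mono[of 1 q "f x"] by simp
      have "max (q * f x) (t * g x) - max (f x) (t * g x) \<le> q * f x - f x"
        using fq by (auto split: split_max)
      then show ?thesis using True by (simp add: algebra_simps)
    next
      case False
      then have "q * f x \<le> t * g x" using assms by (simp add: field_simps)
      moreover have "f x \<le> q * f x" using assms f_nn[of x] mult_right_mono[of 1 q "f x"] by simp
      ultimately show ?thesis using False by auto
    qed
  qed (auto intro!: integrable_diff)
  also have "\<dots> = (q - 1) * hh (t / q)"
    unfolding hh_def by (rule integral_mult_right_zero)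
  finally show ?thesis .
qed

lemma gamma_eq: "gamma_plus M f g t = hh t / t"
  unfolding gamma_plus_def hh_def by simp

lemma hh_pos_ex: "\<exists>s>0. hh s > 0"
proof (rule ccontr)
  assume "\<not> ?thesis"
  then have z: "\<And>s. s > 0 \<Longrightarrow> hh s = 0" using hh_nn by (meson not_le order.antisym)
  have "\<And>n::nat. AE x in M. f x * indicator {s. f s > (1 / Suc n) * g s} x = 0"
  proof -
    fix n :: nat
    have "(\<integral>s. f s * indicator {s. f s > (1 / Suc n) * g s} s \<partial>M) = 0"
      using z[of "1 / Suc n"] unfolding hh_def by simp
    then show "AE x in M. f x * indicator {s. f s > (1 / Suc n) * g s} x = 0"
      using integral_nonneg_eq_0_iff_AE[OF int_fi[of "1 / Suc n"]] by (simp add: f_nn del: of_nat_Suc)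
  qed
  then have "AE x in M. \<forall>n::nat. f x * indicator {s. f s > (1 / Suc n) * g s} x = 0"
    unfolding AE_all_countable by blast
  then have "AE x in M. f x = 0"
  proof (rule eventually_mono)
    fix x assume a: "\<forall>n::nat. f x * indicator {s. f s > (1 / Suc n) * g s} x = 0"
    show "f x = 0"
    proof (rule ccontr)
      assume "f x \<noteq> 0"
      then have fp: "f x > 0" using f_nn[of x] by simp
      obtain n :: nat where n: "g x / f x < Suc n"
        using reals_Archimedean2 by (metis of_nat_Suc less_trans lessI of_nat_less_iff)
      have "(1 / Suc n) * g x < f x" using n fp by (simp add: field_simps)
      then show False using a[rule_format, of n] fp by (auto split: split_indicator)
    qed
  qed
  then have "(\<integral>s. f s \<partial>M) = (\<integral>s. 0 \<partial>M)" by (rule integral_cong_AE[OF f_meas borel_measurable_const])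
  then show False using int_f by simp
qed

end

lemma ana_swap: "ana M f g \<Longrightarrow> ana M g f"
  unfolding ana_def by auto

lemma gamma_minus_swap: "gamma_minus M f g = gamma_plus M g f"
  unfolding gamma_minus_def gamma_plus_def by auto

lemma exp_diff_lower: fixes a b z :: real
  assumes "a \<le> b" "0 \<le> z" shows "(b - a) * z * exp (-(b*z)) \<le> exp (-(a*z)) - exp (-(b*z))"
proof -
  have "exp (-(a*z)) = exp (-(b*z)) * exp ((b-a)*z)" by (simp add: exp_add[symmetric] algebra_simps)
  moreover have "1 + (b-a)*z \<le> exp ((b-a)*z)" by (rule exp_ge_add_one_self)
  ultimately have "exp (-(a*z)) \<ge> exp (-(b*z)) * (1 + (b-a)*z)"
    by (simp add: mult_left_mono)
  then show ?thesis by (simp add: algebra_simps)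
qed

lemma exp_diff_upper: fixes a b z :: real
  assumes "a \<le> b" "0 \<le> z" shows "exp (-(a*z)) - exp (-(b*z)) \<le> (b - a) * z * exp (-(a*z))"
proof -
  have "exp (-(b*z)) = exp (-(a*z)) * exp (-((b-a)*z))" by (simp add: exp_add[symmetric] algebra_simps)
  moreover have "1 + (-((b-a)*z)) \<le> exp (-((b-a)*z))" by (rule exp_ge_add_one_self)
  ultimately have "exp (-(b*z)) \<ge> exp (-(a*z)) * (1 - (b-a)*z)"
    by (simp add: mult_left_mono)
  then show ?thesis by (simp add: algebra_simps)
qed

lemma lower_sum: fixes a b q \<epsilon> :: real and m :: nat
  assumes "0 < b" "a \<le> b" "1 < q" "0 < \<epsilon>"
  shows "(b - a) / (b * (q - 1)) * (exp (-(q * b / (\<epsilon> * q^m))) - exp (-(q * b / \<epsilon>)))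
     \<le> (\<Sum>j<m. exp (-(a / (\<epsilon> * q^j))) - exp (-(b / (\<epsilon> * q^j))))"
proof -
  define v where "v j = b / (\<epsilon> * q^j)" for j
  have vpos: "v j \<ge> 0" for j using assms by (simp add: v_def)
  have vq: "q * v (Suc j) = v j" for j using assms by (simp add: v_def field_simps)
  have "(b - a) / (b * (q - 1)) * (exp (-(q * b / (\<epsilon> * q^m))) - exp (-(q * b / \<epsilon>)))
      = (b - a) / (b * (q - 1)) * (\<Sum>j<m. exp (-(q * v (Suc j))) - exp (-(q * v j)))"
    by (subst sum_lessThan_telescope) (simp add: v_def)
  also have "\<dots> = (\<Sum>j<m. (b - a) / (b * (q - 1)) * (exp (-(1 * v j)) - exp (-(q * v j))))"
    by (simp add: vq sum_distrib_left)
  also have "\<dots> \<le> (\<Sum>j<m. (b - a) / (b * (q - 1)) * ((q - 1) * v j * exp (-(1 * v j))))"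
    using assms vpos by (intro sum_mono mult_left_mono exp_diff_upper) auto
  also have "\<dots> = (\<Sum>j<m. (b - a) * (1 / (\<epsilon> * q^j)) * exp (-(b * (1 / (\<epsilon> * q^j)))))"
    using assms by (intro sum.cong refl) (simp add: v_def field_simps)
  also have "\<dots> \<le> (\<Sum>j<m. exp (-(a * (1 / (\<epsilon> * q^j)))) - exp (-(b * (1 / (\<epsilon> * q^j)))))"
    using assms by (intro sum_mono exp_diff_lower) auto
  finally show ?thesis by simp
qed

lemma upper_sum: fixes a b q \<epsilon> :: real and m :: nat
  assumes "0 < b" "b \<le> a" "1 < q" "0 < \<epsilon>"
  shows "(\<Sum>j<m. exp (-(b / (\<epsilon> * q^Suc j))) - exp (-(a / (\<epsilon> * q^Suc j))))
     \<le> (a - b) / b * (q / (q - 1))"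
proof -
  define w where "w j = b / (\<epsilon> * q^Suc j)" for j
  have wpos: "w j \<ge> 0" for j using assms by (simp add: w_def)
  have wq: "w j / q = w (Suc j)" for j using assms by (simp add: w_def field_simps)
  have "(\<Sum>j<m. exp (-(b / (\<epsilon> * q^Suc j))) - exp (-(a / (\<epsilon> * q^Suc j))))
     = (\<Sum>j<m. exp (-(b * (1 / (\<epsilon> * q^Suc j)))) - exp (-(a * (1 / (\<epsilon> * q^Suc j)))))"
    by simp
  also have "\<dots> \<le> (\<Sum>j<m. (a - b) * (1 / (\<epsilon> * q^Suc j)) * exp (-(b * (1 / (\<epsilon> * q^Suc j)))))"
    using assms by (intro sum_mono exp_diff_upper) auto
  also have "\<dots> = (\<Sum>j<m. (a - b) / b / (q - 1) * ((q - 1) * w j * exp (-(1 * w j))))"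
    using assms by (intro sum.cong refl) (simp add: w_def field_simps)
  also have "\<dots> \<le> (\<Sum>j<m. (a - b) / b / (q - 1) * (q * (exp (-((1/q) * w j)) - exp (-(1 * w j)))))"
  proof (intro sum_mono mult_left_mono)
    fix j
    have "(1 - 1/q) * w j * exp (-(1 * w j)) \<le> exp (-((1/q) * w j)) - exp (-(1 * w j))"
      using exp_diff_lower[of "1/q" 1 "w j"] assms wpos[of j] by simp
    then have "q * ((1 - 1/q) * w j * exp (-(1 * w j))) \<le> q * (exp (-((1/q) * w j)) - exp (-(1 * w j)))"
      using assms by (intro mult_left_mono) auto
    then show "(q - 1) * w j * exp (-(1 * w j)) \<le> q * (exp (-((1/q) * w j)) - exp (-(1 * w j)))"
      using assms by (simp add: algebra_simps)
  qed (use assms in auto)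
  also have "\<dots> = (a - b) / b / (q - 1) * q * (\<Sum>j<m. exp (- w (Suc j)) - exp (- w j))"
    by (simp add: sum_distrib_left wq[symmetric] mult.assoc)
  also have "\<dots> = (a - b) / b / (q - 1) * q * (exp (- w m) - exp (- w 0))"
    by (subst sum_lessThan_telescope) simp
  also have "\<dots> \<le> (a - b) / b / (q - 1) * q * 1"
  proof (intro mult_left_mono)
    have "exp (- w m) \<le> 1" using wpos[of m] by simp
    moreover have "exp (- w 0) > 0" by simp
    ultimately show "exp (- w m) - exp (- w 0) \<le> 1" by linarith
  qed (use assms in auto)
  finally show ?thesis by simp
qed

lemma le_of_eps_mult: fixes K p :: real
  assumes "K \<ge> 0" and h: "\<And>d. 0 < d \<Longrightarrow> d < 1 \<Longrightarrow> K * (1 - d) \<le> p" shows "K \<le> p"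
proof (rule field_le_epsilon)
  fix e :: real assume e: "e > 0"
  define d where "d = min (1/2) (e / (K + 1))"
  have d: "0 < d" "d < 1" using e assms(1) by (auto simp: d_def)
  have "K * d \<le> K * (e / (K + 1))" using assms(1) by (intro mult_left_mono) (auto simp: d_def)
  also have "\<dots> \<le> e" using assms(1) e by (simp add: field_simps)
  finally have "K * d \<le> e" .
  then show "K \<le> p + e" using h[OF d] by (simp add: algebra_simps)
qed

lemma exp_neg_le_inv: fixes y :: real assumes "y > 0" shows "exp (- y) \<le> 1 / y"
proof -
  have "y \<le> exp y" using exp_ge_add_one_self[of y] by linarith
  then show ?thesis using assms by (simp add: exp_minus field_simps)
qed

lemma one_minus_exp_neg_le: fixes z :: real shows "1 - exp (- z) \<le> z"
  using exp_ge_add_one_self[of "-z"] by simp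

lemma exists_bracket: fixes x :: "nat \<Rightarrow> real"
  assumes "mono x" "x 0 < y" "y \<le> x m" shows "\<exists>j<m. x j < y \<and> y \<le> x (Suc j)"
  using assms(3)
proof (induction m)
  case 0 then show ?case using assms(2) by simp
next
  case (Suc m)
  show ?case
  proof (cases "y \<le> x m")
    case True then show ?thesis using Suc.IH by (meson less_SucI)
  next
    case False then show ?thesis using Suc.prems by (intro exI[of _ m]) auto
  qed
qed

locale pr = ana M f g for M :: "'a measure" and f g +
  fixes P :: "'w measure" and A B :: "'w \<Rightarrow> real"
  assumes P_prob: "prob_space P"
    and A_meas[measurable]: "A \<in> borel_measurable P" and B_meas[measurable]: "B \<in> borel_measurable P"
    and cdf: "\<And>x y. x > 0 \<Longrightarrow> y > 0 \<Longrightarrow>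
      measure P {w \<in> space P. A w \<le> x \<and> B w \<le> y} = exp (- (\<integral>s. max (f s / x) (g s / y) \<partial>M))"
begin

lemma swap: "pr M g f P B A"
  unfolding pr_def pr_axioms_def using ana_axioms ana_swap P_prob cdf
  by (auto simp: max.commute conj_commute)

interpretation prob_space P by (rule P_prob)

lemma intmax_bounds: assumes "c1 > 0" "c2 > 0"
  shows "c1 \<le> (\<integral>s. max (c1 * f s) (c2 * g s) \<partial>M)" "(\<integral>s. max (c1 * f s) (c2 * g s) \<partial>M) \<le> c1 + c2"
proof -
  have "(\<integral>s. c1 * f s \<partial>M) \<le> (\<integral>s. max (c1 * f s) (c2 * g s) \<partial>M)"
    by (rule integral_mono) auto
  then show "c1 \<le> (\<integral>s. max (c1 * f s) (c2 * g s) \<partial>M)" using int_f by simp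
  have "(\<integral>s. max (c1 * f s) (c2 * g s) \<partial>M) \<le> (\<integral>s. c1 * f s + c2 * g s \<partial>M)"
  proof (rule integral_mono)
    fix x have "0 \<le> c1 * f x" "0 \<le> c2 * g x" using assms f_nn[of x] g_nn[of x] by auto
    then show "max (c1 * f x) (c2 * g x) \<le> c1 * f x + c2 * g x" by simp
  qed auto
  then show "(\<integral>s. max (c1 * f s) (c2 * g s) \<partial>M) \<le> c1 + c2" using int_f int_g by simp
qed

lemma G_scale: assumes "x > 0" "c1 > 0" "c2 > 0"
  shows "measure P {w \<in> space P. A w \<le> x / c1 \<and> B w \<le> x / c2} = exp (- ((\<integral>s. max (c1 * f s) (c2 * g s) \<partial>M) / x))"
proof -
  have "(\<integral>s. max (f s / (x / c1)) (g s / (x / c2)) \<partial>M) = (\<integral>s. max (c1 * f s) (c2 * g s) / x \<partial>M)"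
  proof (rule Bochner_Integration.integral_cong[OF refl])
    fix s
    have "f s / (x / c1) = c1 * f s / x" "g s / (x / c2) = c2 * g s / x" using assms by auto
    then show "max (f s / (x / c1)) (g s / (x / c2)) = max (c1 * f s) (c2 * g s) / x"
      using assms by (simp add: max_divide_distrib_right mult.commute)
  qed
  also have "\<dots> = (\<integral>s. max (c1 * f s) (c2 * g s) \<partial>M) / x" by (rule integral_divide_zero)
  finally show ?thesis using cdf[of "x/c1" "x/c2"] assms by simp
qed

lemma PA_le: assumes "x > 0" shows "prob {w \<in> space P. A w \<le> x} \<le> 3 * x"
proof -
  have "{w \<in> space P. A w \<le> x} \<subseteq> {w \<in> space P. A w \<le> x \<and> B w \<le> 1/x} \<union> (space P - {w \<in> space P. B w \<le> 1/x})"
    by auto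
  then have "prob {w \<in> space P. A w \<le> x} \<le> prob ({w \<in> space P. A w \<le> x \<and> B w \<le> 1/x} \<union> (space P - {w \<in> space P. B w \<le> 1/x}))"
    by (intro finite_measure_mono) auto
  also have "\<dots> \<le> prob {w \<in> space P. A w \<le> x \<and> B w \<le> 1/x} + prob (space P - {w \<in> space P. B w \<le> 1/x})"
    by (rule measure_subadditive) auto
  also have "prob {w \<in> space P. A w \<le> x \<and> B w \<le> 1/x} \<le> x"
  proof -
    have "prob {w \<in> space P. A w \<le> x \<and> B w \<le> 1/x} = prob {w \<in> space P. A w \<le> 1 / (1/x) \<and> B w \<le> 1/x}"
      by simp
    also have "\<dots> = exp (- ((\<integral>s. max ((1/x) * f s) (x * g s) \<partial>M) / 1))"
      using G_scale[of 1 "1/x" x] assms by simp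
    also have "\<dots> \<le> exp (- (1/x))"
      using intmax_bounds(1)[of "1/x" x] assms by simp
    also have "\<dots> \<le> 1 / (1/x)" by (rule exp_neg_le_inv) (use assms in simp)
    finally show ?thesis by simp
  qed
  also have "prob (space P - {w \<in> space P. B w \<le> 1/x}) \<le> 2 * x"
  proof -
    have "prob (space P - {w \<in> space P. B w \<le> 1/x}) = 1 - prob {w \<in> space P. B w \<le> 1/x}"
      by (rule prob_compl) auto
    also have "\<dots> \<le> 1 - prob {w \<in> space P. A w \<le> 1 / x \<and> B w \<le> 1/x}"
      by (simp, intro finite_measure_mono) auto
    also have "prob {w \<in> space P. A w \<le> 1 / x \<and> B w \<le> 1/x} = exp (- ((\<integral>s. max (x * f s) (x * g s) \<partial>M) / 1))"
      using G_scale[of 1 x x] assms by simp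
    also have "1 - \<dots> \<le> (\<integral>s. max (x * f s) (x * g s) \<partial>M)"
      using one_minus_exp_neg_le by simp
    also have "\<dots> \<le> 2 * x" using intmax_bounds(2)[of x x] assms by simp
    finally show ?thesis .
  qed
  finally show ?thesis by simp
qed

lemma PA_gt: assumes "x > 0" shows "prob {w \<in> space P. A w > x} \<le> 2 / x"
proof -
  have "prob {w \<in> space P. A w > x} \<le> prob (space P - {w \<in> space P. A w \<le> x \<and> B w \<le> x})"
    by (intro finite_measure_mono) auto
  also have "\<dots> = 1 - prob {w \<in> space P. A w \<le> x \<and> B w \<le> x}"
    by (rule prob_compl) auto
  also have "prob {w \<in> space P. A w \<le> x \<and> B w \<le> x} = exp (- ((\<integral>s. max (1 * f s) (1 * g s) \<partial>M) / x))"
    using G_scale[of x 1 1] assms by simp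
  also have "1 - \<dots> \<le> (\<integral>s. max (1 * f s) (1 * g s) \<partial>M) / x"
    using one_minus_exp_neg_le by simp
  also have "\<dots> \<le> 2 / x" using intmax_bounds(2)[of 1 1] assms by (simp add: divide_right_mono)
  finally show ?thesis .
qed

lemma A_nonpos_null: "prob {w \<in> space P. A w \<le> 0} = 0"
proof -
  have "prob {w \<in> space P. A w \<le> 0} \<le> 0 + e" if "e > 0" for e
  proof -
    have "prob {w \<in> space P. A w \<le> 0} \<le> prob {w \<in> space P. A w \<le> e/3}"
      by (intro finite_measure_mono) (use that in auto)
    also have "\<dots> \<le> 3 * (e/3)" by (rule PA_le) (use that in auto)
    finally show ?thesis by simp
  qed
  then have "prob {w \<in> space P. A w \<le> 0} \<le> 0" by (rule field_le_epsilon)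
  then show ?thesis using measure_nonneg[of P] by (meson order.antisym)
qed

lemma AE_A_pos: "AE w in P. A w > 0"
proof (rule AE_I')
  show "{w \<in> space P. A w \<le> 0} \<in> null_sets P"
    using A_nonpos_null by (auto simp: null_sets_def emeasure_eq_measure)
qed auto

lemma AE_B_pos: "AE w in P. B w > 0"
proof -
  interpret sw: pr M g f P B A by (rule swap)
  show ?thesis by (rule sw.AE_A_pos)
qed

lemma CC_pos: "t > 0 \<Longrightarrow> CC t > 0"
  using CC_bounds(1)[of t] by linarith

lemma p_lower: assumes t: "t > 0" and q: "q > 1"
  shows "hh (q * t) / (q * CC t) \<le> prob {w \<in> space P. A w > t * B w}"
proof -
  define b where "b = CC t"
  define a where "a = (\<integral>s. max ((1/q) * f s) (t * g s) \<partial>M)"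
  have bpos: "b > 0" using CC_pos t by (simp add: b_def)
  have a_eq: "a = (\<integral>s. max (f s / q) (t * g s) \<partial>M)" by (simp add: a_def)
  have ab: "a \<le> b" unfolding a_def b_def CC_def
  proof (rule integral_mono)
    fix x have "(1/q) * f x \<le> f x" using q f_nn[of x] mult_right_mono[of "1/q" 1 "f x"] by simp
    then show "max ((1/q) * f x) (t * g x) \<le> max (f x) (t * g x)" by simp
  qed auto
  have dl: "(1 - 1/q) * hh (q * t) \<le> b - a"
    using diff_lower[OF t q] by (simp add: a_eq b_def)
  define K where "K = (b - a) / (b * (q - 1))"
  have K0: "K \<ge> 0" using ab bpos q by (simp add: K_def)
  have "hh (q * t) / (q * b) = (1 - 1/q) * hh (q * t) / (b * (q - 1))"
    using q bpos by (simp add: field_simps)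
  also have "\<dots> \<le> K" unfolding K_def using dl bpos q by (intro divide_right_mono) auto
  finally have hK: "hh (q * t) / (q * b) \<le> K" .
  have main: "K * (exp (-(q * b / (\<epsilon> * q^m))) - exp (-(q * b / \<epsilon>))) \<le> prob {w \<in> space P. A w > t * B w}"
    if e: "\<epsilon> > 0" for \<epsilon> m
  proof -
    define E where "E j = {w \<in> space P. A w \<le> \<epsilon> * q^Suc j \<and> B w \<le> \<epsilon> * q^j / t} -
                          {w \<in> space P. A w \<le> \<epsilon> * q^j \<and> B w \<le> \<epsilon> * q^j / t}" for j
    have Emeas: "E j \<in> sets P" for j unfolding E_def by measurable
    have Eval: "prob (E j) = exp (-(a / (\<epsilon> * q^j))) - exp (-(b / (\<epsilon> * q^j)))" for j
    proof -
      have xp: "\<epsilon> * q^j > 0" using e q by simp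
      have s1: "{w \<in> space P. A w \<le> \<epsilon> * q^Suc j \<and> B w \<le> \<epsilon> * q^j / t}
          = {w \<in> space P. A w \<le> (\<epsilon> * q^j) / (1/q) \<and> B w \<le> (\<epsilon> * q^j) / t}" by (simp add: algebra_simps)
      have s2: "{w \<in> space P. A w \<le> \<epsilon> * q^j \<and> B w \<le> \<epsilon> * q^j / t}
          = {w \<in> space P. A w \<le> (\<epsilon> * q^j) / 1 \<and> B w \<le> (\<epsilon> * q^j) / t}" by simp
      have "prob (E j) = prob {w \<in> space P. A w \<le> \<epsilon> * q^Suc j \<and> B w \<le> \<epsilon> * q^j / t} -
                          prob {w \<in> space P. A w \<le> \<epsilon> * q^j \<and> B w \<le> \<epsilon> * q^j / t}"
        unfolding E_def
      proof (rule finite_measure_Diff)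
        have "\<epsilon> * q^j \<le> \<epsilon> * q^Suc j" using e q by simp
        then show "{w \<in> space P. A w \<le> \<epsilon> * q^j \<and> B w \<le> \<epsilon> * q^j / t} \<subseteq>
          {w \<in> space P. A w \<le> \<epsilon> * q^Suc j \<and> B w \<le> \<epsilon> * q^j / t}" by auto
      qed auto
      also have "\<dots> = exp (-(a / (\<epsilon> * q^j))) - exp (-(b / (\<epsilon> * q^j)))"
        unfolding s1 s2 using G_scale[OF xp, of "1/q" t] G_scale[OF xp, of 1 t] q t
        by (simp add: a_def b_def CC_def)
      finally show ?thesis .
    qed
    have disj: "disjoint_family_on E {..<m}"
    proof (unfold disjoint_family_on_def, intro ballI impI)
      fix i j assume ij: "i \<in> {..<m}" "j \<in> {..<m}" "i \<noteq> j"
      { fix i j :: nat assume "i < j"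
        then have "Suc i \<le> j" by simp
        then have "\<epsilon> * q^Suc i \<le> \<epsilon> * q^j" using e q by (intro mult_left_mono power_increasing) auto
        then have "E i \<inter> E j = {}" unfolding E_def by auto }
      then show "E i \<inter> E j = {}" using ij by (metis Int_commute linorder_neqE_nat)
    qed
    have "K * (exp (-(q * b / (\<epsilon> * q^m))) - exp (-(q * b / \<epsilon>))) \<le> (\<Sum>j<m. prob (E j))"
      unfolding Eval K_def by (rule lower_sum[OF bpos ab q e])
    also have "\<dots> = prob (\<Union>j<m. E j)"
      by (rule finite_measure_finite_Union[symmetric]) (auto simp: Emeas disj)
    also have "\<dots> \<le> prob {w \<in> space P. A w > t * B w}"
    proof (rule finite_measure_mono)
      show "(\<Union>j<m. E j) \<subseteq> {w \<in> space P. A w > t * B w}"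
      proof
        fix w assume "w \<in> (\<Union>j<m. E j)"
        then obtain j where "w \<in> E j" by auto
        then have "w \<in> space P" "B w \<le> \<epsilon> * q^j / t" "\<not> A w \<le> \<epsilon> * q^j" unfolding E_def by auto
        then show "w \<in> {w \<in> space P. A w > t * B w}" using t by (auto simp: field_simps)
      qed
    qed auto
    finally show ?thesis .
  qed
  have "K \<le> prob {w \<in> space P. A w > t * B w}"
  proof (rule le_of_eps_mult[OF K0])
    fix d :: real assume d: "0 < d" "d < 1"
    define \<epsilon> where "\<epsilon> = d / 2 * q * b"
    have ep: "\<epsilon> > 0" using d q bpos by (simp add: \<epsilon>_def)
    obtain m where m: "2 * q * b / (\<epsilon> * d) < q ^ m" using real_arch_pow[OF q] by blast
    have qm: "q ^ m > 0" using q by simp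
    have "exp (-(q * b / \<epsilon>)) \<le> 1 / (q * b / \<epsilon>)" by (rule exp_neg_le_inv) (use q bpos ep in simp)
    also have "\<dots> = d / 2" using q bpos d by (simp add: \<epsilon>_def field_simps)
    finally have e1: "exp (-(q * b / \<epsilon>)) \<le> d / 2" .
    have "1 - q * b / (\<epsilon> * q^m) \<le> exp (-(q * b / (\<epsilon> * q^m)))"
      using one_minus_exp_neg_le[of "q * b / (\<epsilon> * q^m)"] by simp
    moreover have "q * b / (\<epsilon> * q^m) \<le> d / 2"
    proof -
      have "2 * q * b < q ^ m * (\<epsilon> * d)" using m ep d by (simp add: field_simps)
      then show ?thesis using ep qm d by (simp add: field_simps)
    qed
    ultimately have e2: "1 - d / 2 \<le> exp (-(q * b / (\<epsilon> * q^m)))" by linarith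
    have "K * (1 - d) \<le> K * (exp (-(q * b / (\<epsilon> * q^m))) - exp (-(q * b / \<epsilon>)))"
      using e1 e2 K0 by (intro mult_left_mono) auto
    also have "\<dots> \<le> prob {w \<in> space P. A w > t * B w}" by (rule main[OF ep])
    finally show "K * (1 - d) \<le> prob {w \<in> space P. A w > t * B w}" .
  qed
  then show ?thesis using hK by (simp add: b_def)
qed

lemma p_upper: assumes t: "t > 0" and q: "q > 1"
  shows "prob {w \<in> space P. A w > t * B w} \<le> q * hh (t / q) / CC t"
proof -
  define b where "b = CC t"
  define a where "a = (\<integral>s. max (q * f s) (t * g s) \<partial>M)"
  have bpos: "b > 0" using CC_pos t by (simp add: b_def)
  have ab: "b \<le> a" unfolding a_def b_def CC_def
  proof (rule integral_mono)
    fix x have "f x \<le> q * f x" using q f_nn[of x] mult_right_mono[of 1 q "f x"] by simp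
    then show "max (f x) (t * g x) \<le> max (q * f x) (t * g x)" by simp
  qed auto
  have du: "a - b \<le> (q - 1) * hh (t / q)"
    using diff_upper[OF t q] by (simp add: a_def b_def)
  define K where "K = (a - b) / b * (q / (q - 1))"
  have "K \<le> (q - 1) * hh (t / q) / b * (q / (q - 1))"
    unfolding K_def using du bpos q by (intro mult_right_mono divide_right_mono) auto
  also have "\<dots> = q * hh (t / q) / b" using q bpos by (simp add: field_simps)
  finally have hK: "K \<le> q * hh (t / q) / b" .
  have main: "prob {w \<in> space P. A w > t * B w} \<le> K + 3 * \<epsilon> + 2 / (\<epsilon> * q^m)"
    if e: "\<epsilon> > 0" for \<epsilon> m
  proof -
    define F where "F j = {w \<in> space P. A w \<le> \<epsilon> * q^Suc j \<and> B w \<le> \<epsilon> * q^Suc j / t} -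
                          {w \<in> space P. A w \<le> \<epsilon> * q^j \<and> B w \<le> \<epsilon> * q^Suc j / t}" for j
    have Fmeas: "F j \<in> sets P" for j unfolding F_def by measurable
    have Fval: "prob (F j) = exp (-(b / (\<epsilon> * q^Suc j))) - exp (-(a / (\<epsilon> * q^Suc j)))" for j
    proof -
      have xp: "\<epsilon> * q^Suc j > 0" using e q by simp
      have s1: "{w \<in> space P. A w \<le> \<epsilon> * q^Suc j \<and> B w \<le> \<epsilon> * q^Suc j / t}
          = {w \<in> space P. A w \<le> (\<epsilon> * q^Suc j) / 1 \<and> B w \<le> (\<epsilon> * q^Suc j) / t}" by simp
      have s2: "{w \<in> space P. A w \<le> \<epsilon> * q^j \<and> B w \<le> \<epsilon> * q^Suc j / t}
          = {w \<in> space P. A w \<le> (\<epsilon> * q^Suc j) / q \<and> B w \<le> (\<epsilon> * q^Suc j) / t}" using q by simp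
      have "prob (F j) = prob {w \<in> space P. A w \<le> \<epsilon> * q^Suc j \<and> B w \<le> \<epsilon> * q^Suc j / t} -
                          prob {w \<in> space P. A w \<le> \<epsilon> * q^j \<and> B w \<le> \<epsilon> * q^Suc j / t}"
        unfolding F_def
      proof (rule finite_measure_Diff)
        have "\<epsilon> * q^j \<le> \<epsilon> * q^Suc j" using e q by simp
        then show "{w \<in> space P. A w \<le> \<epsilon> * q^j \<and> B w \<le> \<epsilon> * q^Suc j / t} \<subseteq>
          {w \<in> space P. A w \<le> \<epsilon> * q^Suc j \<and> B w \<le> \<epsilon> * q^Suc j / t}" by auto
      qed auto
      also have "\<dots> = exp (-(b / (\<epsilon> * q^Suc j))) - exp (-(a / (\<epsilon> * q^Suc j)))"
        unfolding s1 s2 using G_scale[OF xp, of q t] G_scale[OF xp, of 1 t] q t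
        by (simp add: a_def b_def CC_def)
      finally show ?thesis .
    qed
    have cover: "{w \<in> space P. A w > t * B w} \<subseteq>
       ({w \<in> space P. A w \<le> \<epsilon>} \<union> {w \<in> space P. A w > \<epsilon> * q^m}) \<union> (\<Union>j<m. F j)"
    proof
      fix w assume w: "w \<in> {w \<in> space P. A w > t * B w}"
      show "w \<in> ({w \<in> space P. A w \<le> \<epsilon>} \<union> {w \<in> space P. A w > \<epsilon> * q^m}) \<union> (\<Union>j<m. F j)"
      proof (cases "A w \<le> \<epsilon> \<or> A w > \<epsilon> * q^m")
        case True then show ?thesis using w by auto
      next
        case False
        have "mono (\<lambda>j. \<epsilon> * q^j)" using e q by (intro monoI mult_left_mono power_increasing) auto
        then obtain j where j: "j < m" "\<epsilon> * q^j < A w" "A w \<le> \<epsilon> * q^Suc j"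
          using exists_bracket[of "\<lambda>j. \<epsilon> * q^j" "A w" m] False by auto
        have "B w \<le> \<epsilon> * q^Suc j / t" using w j t by (simp add: field_simps)
        then have "w \<in> F j" using j w unfolding F_def by auto
        then show ?thesis using j by auto
      qed
    qed
    have "prob {w \<in> space P. A w > t * B w} \<le>
       prob (({w \<in> space P. A w \<le> \<epsilon>} \<union> {w \<in> space P. A w > \<epsilon> * q^m}) \<union> (\<Union>j<m. F j))"
    proof (rule finite_measure_mono[OF cover])
      have "(\<Union>j<m. F j) \<in> sets P" using Fmeas by auto
      then show "({w \<in> space P. A w \<le> \<epsilon>} \<union> {w \<in> space P. A w > \<epsilon> * q^m}) \<union> (\<Union>j<m. F j) \<in> sets P"
        by (intro sets.Un) auto
    qed
    also have "\<dots> \<le> prob ({w \<in> space P. A w \<le> \<epsilon>} \<union> {w \<in> space P. A w > \<epsilon> * q^m}) + prob (\<Union>j<m. F j)"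
      by (rule measure_subadditive) (auto simp: Fmeas)
    also have "prob ({w \<in> space P. A w \<le> \<epsilon>} \<union> {w \<in> space P. A w > \<epsilon> * q^m}) \<le>
        prob {w \<in> space P. A w \<le> \<epsilon>} + prob {w \<in> space P. A w > \<epsilon> * q^m}"
      by (rule measure_subadditive) auto
    also have "prob (\<Union>j<m. F j) \<le> (\<Sum>j<m. prob (F j))"
      by (rule finite_measure_subadditive_finite) (auto simp: Fmeas)
    also have "(\<Sum>j<m. prob (F j)) \<le> K"
      unfolding Fval K_def by (rule upper_sum[OF bpos ab q e])
    also have "prob {w \<in> space P. A w \<le> \<epsilon>} \<le> 3 * \<epsilon>" by (rule PA_le[OF e])
    also have "prob {w \<in> space P. A w > \<epsilon> * q^m} \<le> 2 / (\<epsilon> * q^m)" by (rule PA_gt) (use e q in simp)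
    finally show ?thesis by simp
  qed
  have "prob {w \<in> space P. A w > t * B w} \<le> K + e" if e: "e > 0" for e
  proof -
    define \<epsilon> where "\<epsilon> = e / 6"
    have ep: "\<epsilon> > 0" using e by (simp add: \<epsilon>_def)
    obtain m where m: "4 / (\<epsilon> * e) < q ^ m" using real_arch_pow[OF q] by blast
    have "2 / (\<epsilon> * q^m) \<le> e / 2"
    proof -
      have "4 < q ^ m * (\<epsilon> * e)" using m ep e by (simp add: field_simps)
      then show ?thesis using ep e q by (simp add: field_simps)
    qed
    then show ?thesis using main[OF ep, of m] by (simp add: \<epsilon>_def)
  qed
  then have "prob {w \<in> space P. A w > t * B w} \<le> K" by (rule field_le_epsilon)
  then show ?thesis using hK by (simp add: b_def)
qed

lemma p_eq: assumes "t \<ge> 0"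
  shows "prob {w \<in> space P. A w / B w > t} = prob {w \<in> space P. A w > t * B w}"
proof (rule measure_eq_AE)
  show "AE w in P. (w \<in> {w \<in> space P. A w / B w > t}) = (w \<in> {w \<in> space P. A w > t * B w})"
    using AE_B_pos by eventually_elim (auto simp: pos_less_divide_eq)
qed auto

lemma p_bounds: assumes t: "t > 0" and q: "q > 1"
  shows "t * gamma_plus M f g (q * t) / CC t \<le> prob {w \<in> space P. A w / B w > t}"
    and "prob {w \<in> space P. A w / B w > t} \<le> t * gamma_plus M f g (t / q) / CC t"
proof -
  have "t * gamma_plus M f g (q * t) / CC t = hh (q * t) / (q * CC t)"
    using t q by (simp add: gamma_eq field_simps)
  then show "t * gamma_plus M f g (q * t) / CC t \<le> prob {w \<in> space P. A w / B w > t}"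
    using p_lower[OF t q] p_eq[of t] t by linarith
  have "t * gamma_plus M f g (t / q) / CC t = q * hh (t / q) / CC t"
    using t q by (simp add: gamma_eq field_simps)
  then show "prob {w \<in> space P. A w / B w > t} \<le> t * gamma_plus M f g (t / q) / CC t"
    using p_upper[OF t q] p_eq[of t] t by linarith
qed

end

lemma squeeze_q:
  fixes u :: "nat \<Rightarrow> real" and lo hi :: "real \<Rightarrow> nat \<Rightarrow> real" and A B :: "real \<Rightarrow> real"
  assumes bnd: "\<And>q. q > 1 \<Longrightarrow> eventually (\<lambda>n. lo q n \<le> u n \<and> u n \<le> hi q n) sequentially"
    and lo: "\<And>q. q > 1 \<Longrightarrow> (lo q \<longlongrightarrow> A q) sequentially"
    and hi: "\<And>q. q > 1 \<Longrightarrow> (hi q \<longlongrightarrow> B q) sequentially"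
    and A: "(A \<longlongrightarrow> L) (at_right 1)" and B: "(B \<longlongrightarrow> L) (at_right 1)"
  shows "(u \<longlongrightarrow> L) sequentially"
proof (rule tendstoI)
  fix e :: real assume e: "e > 0"
  have "eventually (\<lambda>q. dist (A q) L < e/2 \<and> dist (B q) L < e/2) (at_right 1)"
    using tendstoD[OF A, of "e/2"] tendstoD[OF B, of "e/2"] e by (auto intro: eventually_conj)
  then obtain b where b: "b > 1" "\<And>y. y > 1 \<Longrightarrow> y < b \<Longrightarrow> dist (A y) L < e/2 \<and> dist (B y) L < e/2"
    unfolding eventually_at_right_field by blast
  define q where "q = (1 + b)/2"
  have q: "q > 1" "q < b" using b by (auto simp: q_def)
  from b(2)[OF q] have AB: "dist (A q) L < e/2" "dist (B q) L < e/2" by auto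
  have "eventually (\<lambda>n. dist (lo q n) (A q) < e/2) sequentially" using tendstoD[OF lo[OF q(1)], of "e/2"] e by simp
  moreover have "eventually (\<lambda>n. dist (hi q n) (B q) < e/2) sequentially" using tendstoD[OF hi[OF q(1)], of "e/2"] e by simp
  ultimately show "eventually (\<lambda>n. dist (u n) L < e) sequentially"
    using bnd[OF q(1)]
  proof eventually_elim
    case (elim n)
    then show ?case using AB unfolding dist_real_def abs_less_iff by linarith
  qed
qed

lemma tendsto_at_right_1_powr:
  fixes y a :: real assumes "y > 0"
  shows "((\<lambda>q. (q * y) powr a) \<longlongrightarrow> y powr a) (at_right 1)"
    and "((\<lambda>q. (y / q) powr a) \<longlongrightarrow> y powr a) (at_right 1)"
proof -
  have "((\<lambda>q. (q * y) powr a) \<longlongrightarrow> (1 * y) powr a) (at_right 1)"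
    using assms by (intro tendsto_intros) auto
  then show "((\<lambda>q. (q * y) powr a) \<longlongrightarrow> y powr a) (at_right 1)" by simp
  have "((\<lambda>q. (y / q) powr a) \<longlongrightarrow> (y / 1) powr a) (at_right 1)"
    using assms by (intro tendsto_intros) auto
  then show "((\<lambda>q. (y / q) powr a) \<longlongrightarrow> y powr a) (at_right 1)" by simp
qed

lemma frac_cancel: fixes n m a b :: real
  assumes "n \<noteq> 0" "m \<noteq> 0" shows "(n * a) / (m * b) * (m / n) = a / b"
  using assms by (cases "b = 0") (simp_all add: field_simps)

lemma rv_from_seq:
  fixes G :: "real \<Rightarrow> real" and \<kappa> :: "nat \<Rightarrow> real"
  assumes mono: "\<And>s t. 0 < s \<Longrightarrow> s \<le> t \<Longrightarrow> G t \<le> G s"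
    and pos: "\<And>t. t > 0 \<Longrightarrow> G t > 0"
    and k: "filterlim \<kappa> at_top sequentially"
    and lim: "\<And>x. x > 0 \<Longrightarrow> (\<lambda>n. real n * G (\<kappa> n * x)) \<longlonglongrightarrow> x powr (-a)"
  shows "regvar G (-a)"
  unfolding regvar_def
proof (intro allI impI)
  fix x :: real assume x: "x > 0"
  define N where "N t = Max {n. \<kappa> n \<le> t}" for t
  have fin: "finite {n. \<kappa> n \<le> t}" for t
  proof -
    from k have "eventually (\<lambda>n. t + 1 \<le> \<kappa> n) sequentially" by (simp add: filterlim_at_top)
    then obtain N0 where "\<And>n. n \<ge> N0 \<Longrightarrow> t + 1 \<le> \<kappa> n" by (auto simp: eventually_sequentially)
    then have "{n. \<kappa> n \<le> t} \<subseteq> {..<N0}" by (auto simp: not_le[symmetric]) (meson not_le linorder_not_le le_less_trans less_add_one)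
    then show ?thesis by (rule finite_subset) auto
  qed
  have Nin: "\<kappa> (N t) \<le> t" and Nout: "\<kappa> (Suc (N t)) > t" if "t \<ge> \<kappa> 0" for t
  proof -
    have ne: "{n. \<kappa> n \<le> t} \<noteq> {}" using that by auto
    show "\<kappa> (N t) \<le> t" using Max_in[OF fin ne] by (simp add: N_def)
    show "\<kappa> (Suc (N t)) > t"
    proof (rule ccontr)
      assume "\<not> \<kappa> (Suc (N t)) > t"
      then have "Suc (N t) \<in> {n. \<kappa> n \<le> t}" by simp
      then have "Suc (N t) \<le> N t" unfolding N_def by (rule Max_ge[OF fin])
      then show False by simp
    qed
  qed
  have NT: "filterlim N at_top at_top"
    unfolding filterlim_at_top
  proof
    fix m :: nat
    define t0 where "t0 = Max (\<kappa> ` {..m})"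
    have "eventually (\<lambda>t. t0 \<le> t) at_top" by (rule eventually_ge_at_top)
    then show "eventually (\<lambda>t. m \<le> N t) at_top"
    proof eventually_elim
      case (elim t)
      have "\<kappa> m \<le> t0" unfolding t0_def by (rule Max_ge) auto
      then have "m \<in> {n. \<kappa> n \<le> t}" using elim by simp
      then show "m \<le> N t" unfolding N_def by (rule Max_ge[OF fin])
    qed
  qed
  have lim1: "(\<lambda>n. real n * G (\<kappa> n)) \<longlonglongrightarrow> 1" using lim[of 1] by simp
  have limS1: "(\<lambda>n. real (Suc n) * G (\<kappa> (Suc n))) \<longlonglongrightarrow> 1"
    using LIMSEQ_Suc[OF lim1] .
  have limSx: "(\<lambda>n. real (Suc n) * G (\<kappa> (Suc n) * x)) \<longlonglongrightarrow> x powr (-a)"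
    using LIMSEQ_Suc[OF lim[OF x]] .
  have rat1: "(\<lambda>n. real (Suc n) / real n) \<longlonglongrightarrow> 1"
  proof -
    have "(\<lambda>n. 1 + 1 / real n) \<longlonglongrightarrow> 1 + 0" by (intro tendsto_intros lim_1_over_n)
    moreover have "eventually (\<lambda>n. 1 + 1 / real n = real (Suc n) / real n) sequentially"
      using eventually_gt_at_top[of 0] by eventually_elim (simp add: field_simps)
    ultimately show ?thesis by (simp add: tendsto_cong)
  qed
  have rat2: "(\<lambda>n. real n / real (Suc n)) \<longlonglongrightarrow> 1"
    using tendsto_inverse[OF rat1] by (simp add: inverse_eq_divide)
  define U where "U n = G (\<kappa> n * x) / G (\<kappa> (Suc n))" for n
  define L where "L n = G (\<kappa> (Suc n) * x) / G (\<kappa> n)" for n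
  have U: "U \<longlonglongrightarrow> x powr (-a)"
  proof -
    have "(\<lambda>n. (real n * G (\<kappa> n * x)) / (real (Suc n) * G (\<kappa> (Suc n))) * (real (Suc n) / real n))
         \<longlonglongrightarrow> x powr (-a) / 1 * 1"
      by (intro tendsto_intros lim[OF x] limS1 rat1) auto
    moreover have "eventually (\<lambda>n. (real n * G (\<kappa> n * x)) / (real (Suc n) * G (\<kappa> (Suc n))) * (real (Suc n) / real n) = U n) sequentially"
      using eventually_gt_at_top[of 0] by eventually_elim (simp add: U_def frac_cancel del: of_nat_Suc)
    ultimately show ?thesis by (simp add: tendsto_cong)
  qed
  have L: "L \<longlonglongrightarrow> x powr (-a)"
  proof -
    have "(\<lambda>n. (real (Suc n) * G (\<kappa> (Suc n) * x)) / (real n * G (\<kappa> n)) * (real n / real (Suc n)))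
         \<longlonglongrightarrow> x powr (-a) / 1 * 1"
      by (intro tendsto_intros limSx lim1 rat2) auto
    moreover have "eventually (\<lambda>n. (real (Suc n) * G (\<kappa> (Suc n) * x)) / (real n * G (\<kappa> n)) * (real n / real (Suc n)) = L n) sequentially"
      using eventually_gt_at_top[of 0] by eventually_elim (simp add: L_def frac_cancel del: of_nat_Suc)
    ultimately show ?thesis by (simp add: tendsto_cong)
  qed
  have UN: "((\<lambda>t. U (N t)) \<longlongrightarrow> x powr (-a)) at_top" by (rule filterlim_compose[OF U NT])
  have LN: "((\<lambda>t. L (N t)) \<longlongrightarrow> x powr (-a)) at_top" by (rule filterlim_compose[OF L NT])
  have kpos: "eventually (\<lambda>n. \<kappa> n > 0) sequentially"
    using k by (simp add: filterlim_at_top_dense)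
  have kposN: "eventually (\<lambda>t. \<kappa> (N t) > 0) at_top"
    by (rule eventually_compose_filterlim[OF kpos NT])
  have bounds: "eventually (\<lambda>t. L (N t) \<le> G (t * x) / G t \<and> G (t * x) / G t \<le> U (N t)) at_top"
    using kposN eventually_ge_at_top[of "\<kappa> 0"]
  proof eventually_elim
    case (elim t)
    let ?n = "N t"
    have k1: "\<kappa> ?n \<le> t" "\<kappa> (Suc ?n) > t" using Nin Nout elim by auto
    have kp: "\<kappa> ?n > 0" using elim by simp
    have tp: "t > 0" using k1 kp by linarith
    have g1: "G (t * x) \<le> G (\<kappa> ?n * x)" using kp x k1 by (intro mono) (auto intro: mult_right_mono)
    have g2: "G (\<kappa> (Suc ?n)) \<le> G t" using tp k1 by (intro mono) auto
    have g3: "G (\<kappa> (Suc ?n) * x) \<le> G (t * x)" using tp x k1 by (intro mono) (auto intro: mult_right_mono)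
    have g4: "G t \<le> G (\<kappa> ?n)" using kp k1 by (intro mono) auto
    have p1: "G (\<kappa> (Suc ?n)) > 0" "G t > 0" "G (t * x) > 0" "G (\<kappa> (Suc ?n) * x) > 0"
      using pos tp x k1 by auto
    have "G (t * x) / G t \<le> G (\<kappa> ?n * x) / G (\<kappa> (Suc ?n))"
      using g1 g2 p1 by (intro frac_le) auto
    moreover have "G (\<kappa> (Suc ?n) * x) / G (\<kappa> ?n) \<le> G (t * x) / G t"
      using g3 g4 p1 by (intro frac_le) auto
    ultimately show ?case by (simp add: U_def L_def)
  qed
  show "((\<lambda>t. G (t * x) / G t) \<longlongrightarrow> x powr (-a)) at_top"
    by (rule tendsto_sandwich[OF _ _ LN UN]) (use bounds in \<open>auto elim: eventually_mono\<close>)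
qed

lemma regvar_compose:
  assumes "regvar G (-a)" "y > 0" "filterlim c at_top sequentially"
  shows "(\<lambda>n. G (c n * y) / G (c n)) \<longlonglongrightarrow> y powr (-a)"
proof -
  have "((\<lambda>t. G (t * y) / G t) \<longlongrightarrow> y powr (-a)) at_top" using assms(1,2) unfolding regvar_def by auto
  from filterlim_compose[OF this assms(3)] show ?thesis .
qed

lemma seq_from_rv:
  fixes G :: "real \<Rightarrow> real" and \<kappa> :: "nat \<Rightarrow> real"
  assumes mono: "\<And>s t. 0 < s \<Longrightarrow> s \<le> t \<Longrightarrow> G t \<le> G s"
    and pos: "\<And>t. t > 0 \<Longrightarrow> G t > 0"
    and bound: "\<And>t. t > 0 \<Longrightarrow> G t \<le> 1 / t"
    and rv: "regvar G (-a)"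
    and eq: "\<kappa> \<sim>[sequentially] (\<lambda>n. geninv (\<lambda>t. 1 / G t) (real n))"
  shows "filterlim \<kappa> at_top sequentially"
    and "\<And>y. y > 0 \<Longrightarrow> (\<lambda>n. real n * G (\<kappa> n * y)) \<longlonglongrightarrow> y powr (-a)"
proof -
  define S where "S n = {s. 0 < s \<and> real n \<le> 1 / G s}" for n :: nat
  define c where "c n = geninv (\<lambda>t. 1 / G t) (real n)" for n
  have c_eq: "c n = Inf (S n)" for n unfolding c_def S_def geninv_def by simp
  have nS: "real n \<in> S n" if "n \<ge> 1" for n :: nat
  proof -
    have np: "real n > 0" using that by simp
    have "G (real n) \<le> 1 / real n" using bound np by simp
    then have "real n \<le> 1 / G (real n)" using pos[OF np] np by (simp add: field_simps)
    then show ?thesis using np by (simp add: S_def)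
  qed
  have bdd: "bdd_below (S n)" for n by (rule bdd_belowI[of _ 0]) (auto simp: S_def)
  have c_top: "filterlim c at_top sequentially"
    unfolding filterlim_at_top
  proof
    fix Z :: real
    define S0 where "S0 = max Z 1"
    have S0p: "S0 > 0" by (simp add: S0_def)
    obtain N0 :: nat where N0: "1 / G S0 < N0" using reals_Archimedean2 by blast
    have "eventually (\<lambda>n. n \<ge> max N0 1) sequentially" by (rule eventually_ge_at_top)
    then show "eventually (\<lambda>n. Z \<le> c n) sequentially"
    proof eventually_elim
      case (elim n)
      have ne: "S n \<noteq> {}" using nS[of n] elim by auto
      have "S0 \<le> Inf (S n)"
      proof (rule cInf_greatest[OF ne])
        fix s assume s: "s \<in> S n"
        show "S0 \<le> s"
        proof (rule ccontr)
          assume "\<not> S0 \<le> s"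
          then have "G S0 \<le> G s" using s by (intro mono) (auto simp: S_def)
          then have "1 / G s \<le> 1 / G S0" using pos[OF S0p] by (intro divide_left_mono) auto
          moreover have "real n > 1 / G S0" using N0 elim by linarith
          ultimately show False using s by (auto simp: S_def)
        qed
      qed
      then show ?case unfolding c_eq S0_def by linarith
    qed
  qed
  have cpos: "eventually (\<lambda>n. c n > 0) sequentially"
    using c_top by (simp add: filterlim_at_top_dense)
  have nc: "(\<lambda>n. real n * G (c n)) \<longlonglongrightarrow> 1"
  proof (rule squeeze_q[where lo = "\<lambda>q n. G (c n) / G (c n * (1/q))" and hi = "\<lambda>q n. G (c n) / G (c n * q)"
        and A = "\<lambda>q. 1 / ((1/q) powr (-a))" and B = "\<lambda>q. 1 / (q powr (-a))"])
    fix q :: real assume q: "q > 1"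
    show "eventually (\<lambda>n. G (c n) / G (c n * (1/q)) \<le> real n * G (c n) \<and> real n * G (c n) \<le> G (c n) / G (c n * q)) sequentially"
      using cpos eventually_ge_at_top[of 1]
    proof eventually_elim
      case (elim n)
      have ne: "S n \<noteq> {}" using nS[of n] elim by auto
      have cn: "c n = Inf (S n)" by (rule c_eq)
      have G1: "G (c n) > 0" using pos elim by auto
      have "Inf (S n) < c n * q" using elim q cn by simp
      then obtain s where s: "s \<in> S n" "s < c n * q" using cInf_lessD[OF ne] by blast
      have "G (c n * q) \<le> G s" using s by (intro mono) (auto simp: S_def)
      moreover have "real n \<le> 1 / G s" using s by (simp add: S_def)
      moreover have Gq: "G (c n * q) > 0" using pos elim q by auto
      ultimately have "real n \<le> 1 / G (c n * q)"
        using pos[of s] s by (smt (verit, best) S_def frac_le mem_Collect_eq)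
      then have up: "real n * G (c n) \<le> G (c n) / G (c n * q)"
        using G1 Gq by (simp add: field_simps)
      have "c n * (1/q) \<notin> S n"
      proof
        assume "c n * (1/q) \<in> S n"
        then have "Inf (S n) \<le> c n * (1/q)" by (rule cInf_lower[OF _ bdd])
        then show False using elim q cn by (simp add: field_simps)
      qed
      then have "1 / G (c n * (1/q)) < real n" using elim q by (auto simp: S_def)
      moreover have Gq': "G (c n * (1/q)) > 0" using pos elim q by auto
      ultimately have lo: "G (c n) / G (c n * (1/q)) \<le> real n * G (c n)"
        using G1 by (simp add: field_simps)
      show ?case using up lo by simp
    qed
  next
    fix q :: real assume q: "q > 1"
    have "(\<lambda>n. G (c n * (1/q)) / G (c n)) \<longlonglongrightarrow> (1/q) powr (-a)"
      by (rule regvar_compose[OF rv _ c_top]) (use q in simp)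
    from tendsto_inverse[OF this] show "(\<lambda>n. G (c n) / G (c n * (1/q))) \<longlonglongrightarrow> 1 / ((1/q) powr (-a))"
      using q by (simp add: inverse_eq_divide)
  next
    fix q :: real assume q: "q > 1"
    have "(\<lambda>n. G (c n * q) / G (c n)) \<longlonglongrightarrow> q powr (-a)"
      by (rule regvar_compose[OF rv _ c_top]) (use q in simp)
    from tendsto_inverse[OF this] show "(\<lambda>n. G (c n) / G (c n * q)) \<longlonglongrightarrow> 1 / (q powr (-a))"
      using q by (simp add: inverse_eq_divide)
  next
    have "((\<lambda>q. 1 / ((1/q) powr (-a))) \<longlongrightarrow> 1 / ((1/1) powr (-a))) (at_right 1)"
      by (intro tendsto_intros) auto
    then show "((\<lambda>q. 1 / ((1/q) powr (-a))) \<longlongrightarrow> 1) (at_right 1)" by simp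
  next
    have "((\<lambda>q. 1 / (q powr (-a))) \<longlongrightarrow> 1 / (1 powr (-a))) (at_right 1)"
      by (intro tendsto_intros) auto
    then show "((\<lambda>q. 1 / (q powr (-a))) \<longlongrightarrow> 1) (at_right 1)" by simp
  qed
  have ncy: "(\<lambda>n. real n * G (c n * y)) \<longlonglongrightarrow> y powr (-a)" if y: "y > 0" for y
  proof -
    have "(\<lambda>n. real n * G (c n) * (G (c n * y) / G (c n))) \<longlonglongrightarrow> 1 * y powr (-a)"
      by (intro tendsto_intros nc regvar_compose[OF rv y c_top])
    moreover have "eventually (\<lambda>n. real n * G (c n) * (G (c n * y) / G (c n)) = real n * G (c n * y)) sequentially"
      using cpos
    proof eventually_elim
      case (elim n)
      then have "G (c n) > 0" by (rule pos)
      then show ?case by (simp add: field_simps)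
    qed
    ultimately show ?thesis by (simp add: tendsto_cong)
  qed
  have ratio: "(\<lambda>n. \<kappa> n / c n) \<longlonglongrightarrow> 1"
  proof (rule asymp_equivD_strong[OF eq[folded c_def]])
    show "eventually (\<lambda>n. \<kappa> n \<noteq> 0 \<or> c n \<noteq> 0) sequentially"
      using cpos by (auto elim: eventually_mono)
  qed
  have kc: "eventually (\<lambda>n. c n / q \<le> \<kappa> n \<and> \<kappa> n \<le> c n * q) sequentially" if q: "q > 1" for q
  proof -
    have "eventually (\<lambda>n. \<kappa> n / c n \<in> {1/q<..<q}) sequentially"
      using q by (intro topological_tendstoD[OF ratio]) auto
    then show ?thesis using cpos
    proof eventually_elim
      case (elim n)
      then show ?case by (auto simp: field_simps)
    qed
  qed
  show ktop: "filterlim \<kappa> at_top sequentially"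
    unfolding filterlim_at_top
  proof
    fix Z :: real
    have "eventually (\<lambda>n. 2 * Z \<le> c n) sequentially" using c_top by (simp add: filterlim_at_top)
    then show "eventually (\<lambda>n. Z \<le> \<kappa> n) sequentially"
    proof -
      assume z: "eventually (\<lambda>n. 2 * Z \<le> c n) sequentially"
      have "eventually (\<lambda>n. c n / 2 \<le> \<kappa> n \<and> \<kappa> n \<le> c n * 2) sequentially" by (rule kc) simp
      with z show ?thesis by eventually_elim auto
    qed
  qed
  fix y :: real assume y: "y > 0"
  show "(\<lambda>n. real n * G (\<kappa> n * y)) \<longlonglongrightarrow> y powr (-a)"
  proof (rule squeeze_q[where lo = "\<lambda>q n. real n * G (c n * (q * y))" and hi = "\<lambda>q n. real n * G (c n * (y / q))"
        and A = "\<lambda>q. (q * y) powr (-a)" and B = "\<lambda>q. (y / q) powr (-a)"])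
    fix q :: real assume q: "q > 1"
    show "eventually (\<lambda>n. real n * G (c n * (q * y)) \<le> real n * G (\<kappa> n * y) \<and> real n * G (\<kappa> n * y) \<le> real n * G (c n * (y / q))) sequentially"
      using kc[OF q] cpos
    proof eventually_elim
      case (elim n)
      have kp: "\<kappa> n > 0" using elim q by (smt (verit) divide_pos_pos)
      have "G (c n * (q * y)) \<le> G (\<kappa> n * y)"
        using elim kp y by (intro mono) (auto intro: mult_right_mono simp: mult.assoc[symmetric])
      moreover have "G (\<kappa> n * y) \<le> G (c n * (y / q))"
      proof (intro mono)
        show "0 < c n * (y / q)" using elim q y by auto
        have "c n / q * y \<le> \<kappa> n * y" using elim y by (intro mult_right_mono) auto
        then show "c n * (y / q) \<le> \<kappa> n * y" by (simp add: field_simps)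
      qed
      ultimately show ?case by (auto intro: mult_left_mono)
    qed
  next
    fix q :: real assume "q > 1"
    then show "(\<lambda>n. real n * G (c n * (q * y))) \<longlonglongrightarrow> (q * y) powr (-a)" using y by (intro ncy) auto
  next
    fix q :: real assume "q > 1"
    then show "(\<lambda>n. real n * G (c n * (y / q))) \<longlonglongrightarrow> (y / q) powr (-a)" using y by (intro ncy) auto
  qed (use tendsto_at_right_1_powr[OF y] in auto)
qed

lemma borel_times: fixes A B :: "real set"
  assumes "A \<in> sets borel" "B \<in> sets borel" shows "A \<times> B \<in> sets (borel :: (real \<times> real) measure)"
  using pair_measureI[OF assms] by (metis borel_prod)

lemma rect_measure:
  fixes \<nu> :: "(real \<times> real) measure"
  assumes "prob_space \<nu>" "sets \<nu> = sets borel" "a \<le> b" "c \<le> d"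
  shows "measure \<nu> ({a<..b} \<times> {c<..d}) = measure \<nu> ({..b} \<times> {..d}) - measure \<nu> ({..a} \<times> {..d})
            - measure \<nu> ({..b} \<times> {..c}) + measure \<nu> ({..a} \<times> {..c})"
proof -
  interpret prob_space \<nu> by fact
  have S: "A \<times> B \<in> sets \<nu>" if "A \<in> sets borel" "B \<in> sets borel" for A B :: "real set"
    using assms(2) borel_times[OF that] by simp
  have strip: "measure \<nu> ({a<..b} \<times> {..y}) = measure \<nu> ({..b} \<times> {..y}) - measure \<nu> ({..a} \<times> {..y})" for y
  proof -
    have "{a<..b} \<times> {..y} = {..b} \<times> {..y} - {..a} \<times> {..y}" using assms(3) by auto
    moreover have "measure \<nu> ({..b} \<times> {..y} - {..a} \<times> {..y}) = measure \<nu> ({..b} \<times> {..y}) - measure \<nu> ({..a} \<times> {..y})"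
      using assms(3) by (intro finite_measure_Diff S) auto
    ultimately show ?thesis by simp
  qed
  have "{a<..b} \<times> {c<..d} = {a<..b} \<times> {..d} - {a<..b} \<times> {..c}" using assms(4) by auto
  moreover have "measure \<nu> ({a<..b} \<times> {..d} - {a<..b} \<times> {..c}) = measure \<nu> ({a<..b} \<times> {..d}) - measure \<nu> ({a<..b} \<times> {..c})"
    using assms(4) by (intro finite_measure_Diff S) auto
  ultimately show ?thesis using strip[of d] strip[of c] by simp
qed

lemma sum_indicator_intervals:
  fixes xs :: "nat \<Rightarrow> real" assumes "mono xs"
  shows "(\<Sum>j<N. indicator {xs j<..xs (Suc j)} t) = (indicator {xs 0<..xs N} t :: real)"
proof (induction N)
  case 0 then show ?case by simp
next
  case (Suc N)
  have "xs 0 \<le> xs N" "xs N \<le> xs (Suc N)" using assms by (auto simp: mono_def)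
  then show ?case using Suc by (auto simp: indicator_def)
qed

lemma approx_integral:
  fixes \<nu> :: "(real \<times> real) measure" and h s :: "real \<times> real \<Rightarrow> real"
  assumes "prob_space \<nu>" "sets \<nu> = sets borel"
    and hm: "h \<in> borel_measurable borel" and sm: "s \<in> borel_measurable borel"
    and hb: "\<And>z. \<bar>h z\<bar> \<le> K" and sb: "\<And>z. \<bar>s z\<bar> \<le> K'"
    and Bm: "B \<in> sets borel"
    and hs: "\<And>z. \<bar>h z - s z\<bar> \<le> \<epsilon> + K * (1 - indicator B z)"
  shows "\<bar>(\<integral>z. h z \<partial>\<nu>) - (\<integral>z. s z \<partial>\<nu>)\<bar> \<le> \<epsilon> + K * (1 - measure \<nu> B)"
proof -
  interpret prob_space \<nu> by fact
  have hm': "h \<in> borel_measurable \<nu>" by (subst measurable_cong_sets[OF assms(2) refl]) (rule hm)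
  have sm': "s \<in> borel_measurable \<nu>" by (subst measurable_cong_sets[OF assms(2) refl]) (rule sm)
  have Bm': "B \<in> sets \<nu>" using Bm assms(2) by simp
  have ih: "integrable \<nu> h" by (rule integrable_const_bound[of _ K]) (use hb hm' in auto)
  have iS: "integrable \<nu> s" by (rule integrable_const_bound[of _ K']) (use sb sm' in auto)
  have iB: "integrable \<nu> (\<lambda>z. \<epsilon> + K * (1 - indicator B z))"
    using Bm' by (intro Bochner_Integration.integrable_add integrable_const Bochner_Integration.integrable_mult_right
        Bochner_Integration.integrable_diff integrable_real_indicator) (auto simp: emeasure_eq_measure)
  have "\<bar>(\<integral>z. h z \<partial>\<nu>) - (\<integral>z. s z \<partial>\<nu>)\<bar> = \<bar>\<integral>z. h z - s z \<partial>\<nu>\<bar>"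
    using ih iS by simp
  also have "\<dots> \<le> (\<integral>z. \<epsilon> + K * (1 - indicator B z) \<partial>\<nu>)"
    by (rule integral_abs_bound_integral[OF Bochner_Integration.integrable_diff[OF ih iS] iB hs])
  also have "\<dots> = \<epsilon> + K * (1 - measure \<nu> B)"
  proof -
    have "(\<integral>z. \<epsilon> + K * (1 - indicator B z) \<partial>\<nu>) = \<epsilon> + K * (1 - (\<integral>z. indicator B z \<partial>\<nu>))"
      using Bm' prob_space by (simp add: emeasure_eq_measure)
    also have "(\<integral>z. indicator B z \<partial>\<nu>) = measure \<nu> B" using Bm' by (simp add: sets.Int_space_eq2)
    finally show ?thesis .
  qed
  finally show ?thesis .
qed

lemma weak_conv_2d:
  fixes \<mu> :: "nat \<Rightarrow> (real \<times> real) measure" and L :: "(real \<times> real) measure"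
  assumes \<mu>p: "\<And>n. prob_space (\<mu> n)" and \<mu>s: "\<And>n. sets (\<mu> n) = sets borel"
    and Lp: "prob_space L" and Ls: "sets L = sets borel"
    and conv: "\<And>x y. (\<lambda>n. measure (\<mu> n) ({..x} \<times> {..y})) \<longlonglongrightarrow> measure L ({..x} \<times> {..y})"
  shows "weak_conv \<mu> L"
  unfolding weak_conv_def
proof (intro allI impI)
  fix h :: "real \<times> real \<Rightarrow> real" assume hc: "continuous_on UNIV h" and hb: "bounded (range h)"
  obtain K where K: "K > 0" "\<And>z. \<bar>h z\<bar> \<le> K" using hb unfolding bounded_pos by auto
  have hm: "h \<in> borel_measurable borel" using hc by (rule borel_measurable_continuous_onI)
  interpret L: prob_space L by (rule Lp)
  have spL: "space L = UNIV" using sets_eq_imp_space_eq[OF Ls] by simp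
  have cellconv: "(\<lambda>n. measure (\<mu> n) ({a<..b} \<times> {c<..d})) \<longlonglongrightarrow> measure L ({a<..b} \<times> {c<..d})"
    if "a \<le> b" "c \<le> d" for a b c d
  proof -
    have "(\<lambda>n. measure (\<mu> n) ({..b} \<times> {..d}) - measure (\<mu> n) ({..a} \<times> {..d})
            - measure (\<mu> n) ({..b} \<times> {..c}) + measure (\<mu> n) ({..a} \<times> {..c}))
       \<longlonglongrightarrow> measure L ({..b} \<times> {..d}) - measure L ({..a} \<times> {..d})
            - measure L ({..b} \<times> {..c}) + measure L ({..a} \<times> {..c})"
      by (intro tendsto_intros conv)
    then show ?thesis
      using rect_measure[OF \<mu>p \<mu>s that] rect_measure[OF Lp Ls that] by simp
  qed
  show "(\<lambda>n. \<integral>z. h z \<partial>\<mu> n) \<longlonglongrightarrow> (\<integral>z. h z \<partial>L)"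
  proof (rule tendstoI)
    fix e :: real assume e: "e > 0"
    define \<epsilon> where "\<epsilon> = e / (4 * K + 4)"
    have \<epsilon>p: "\<epsilon> > 0" using e K by (simp add: \<epsilon>_def)
    define Bx where "Bx R = {-R<..R} \<times> {-R<..R}" for R :: real
    have Bxs: "Bx R \<in> sets borel" for R unfolding Bx_def by (intro borel_times) auto
    have "(\<lambda>n. measure L (Bx (real n))) \<longlonglongrightarrow> measure L (\<Union>n. Bx (real n))"
    proof (rule L.finite_Lim_measure_incseq)
      show "range (\<lambda>n. Bx (real n)) \<subseteq> sets L" using Bxs Ls by auto
      show "incseq (\<lambda>n. Bx (real n))" unfolding Bx_def by (intro monoI) auto
    qed
    moreover have "(\<Union>n. Bx (real n)) = UNIV"
    proof safe
      fix x y :: real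
      obtain n :: nat where "max \<bar>x\<bar> \<bar>y\<bar> < n" using reals_Archimedean2 by blast
      then show "(x, y) \<in> (\<Union>n. Bx (real n))" unfolding Bx_def by (intro UN_I[of n]) auto
    qed auto
    ultimately have "(\<lambda>n. measure L (Bx (real n))) \<longlonglongrightarrow> 1"
      using L.prob_space spL by simp
    then have "eventually (\<lambda>n. measure L (Bx (real n)) > 1 - \<epsilon>) sequentially"
      using \<epsilon>p by (intro order_tendstoD) auto
    then obtain N0 where N0: "\<And>n. n \<ge> N0 \<Longrightarrow> measure L (Bx (real n)) > 1 - \<epsilon>"
      by (auto simp: eventually_sequentially)
    define R where "R = real (Suc N0)"
    have Rp: "R > 0" by (simp add: R_def)
    have LB: "measure L (Bx R) > 1 - \<epsilon>" using N0[of "Suc N0"] by (simp add: R_def)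
    define S where "S = {-R..R} \<times> {-R..R}"
    have "uniformly_continuous_on S h"
      by (rule compact_uniformly_continuous[OF continuous_on_subset[OF hc]]) (auto simp: S_def intro: compact_Times)
    then obtain \<delta> where \<delta>: "\<delta> > 0" "\<And>x x'. x \<in> S \<Longrightarrow> x' \<in> S \<Longrightarrow> dist x' x < \<delta> \<Longrightarrow> dist (h x') (h x) < \<epsilon>"
      unfolding uniformly_continuous_on_def using \<epsilon>p by metis
    obtain N :: nat where N: "4 * R / \<delta> < N" using reals_Archimedean2 by blast
    have Np: "N > 0" using N Rp \<delta> by (cases N) (auto simp: field_simps)
    have Nd: "4 * R / N < \<delta>" using N Np \<delta> Rp by (simp add: field_simps)
    define xs where "xs j = -R + real j * (2 * R / N)" for j
    have xs_mono: "mono xs"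
    proof (rule monoI)
      fix i j :: nat assume "i \<le> j"
      moreover have "0 \<le> 2 * R / N" using Rp by simp
      ultimately have "real i * (2 * R / N) \<le> real j * (2 * R / N)" by (intro mult_right_mono) auto
      then show "xs i \<le> xs j" unfolding xs_def by simp
    qed
    have xs0: "xs 0 = -R" and xsN: "xs N = R" using Np by (auto simp: xs_def)
    have xs_step: "xs (Suc j) - xs j = 2 * R / N" for j by (simp add: xs_def algebra_simps add_divide_distrib)
    have xs_range: "xs j \<in> {-R..R}" if "j \<le> N" for j
    proof -
      have "xs 0 \<le> xs j" "xs j \<le> xs N" using xs_mono that by (auto simp: mono_def)
      then show ?thesis using xs0 xsN by simp
    qed
    define I where "I = {..<N} \<times> {..<N}"
    define cell where "cell p = {xs (fst p)<..xs (Suc (fst p))} \<times> {xs (snd p)<..xs (Suc (snd p))}" for p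
    define cn where "cn p = (xs (fst p), xs (snd p))" for p
    define s where "s z = (\<Sum>p\<in>I. h (cn p) * indicator (cell p) z)" for z
    have cells: "cell p \<in> sets borel" for p unfolding cell_def by (intro borel_times) auto
    have part: "(\<Sum>p\<in>I. indicator (cell p) z :: real) = indicator (Bx R) z" for z
    proof -
      have "(\<Sum>p\<in>I. indicator (cell p) z :: real) =
          (\<Sum>j<N. \<Sum>k<N. indicator {xs j<..xs (Suc j)} (fst z) * indicator {xs k<..xs (Suc k)} (snd z))"
        unfolding I_def cell_def indicator_times sum.cartesian_product by (intro sum.cong refl) (auto split: prod.splits)
      also have "\<dots> = (\<Sum>j<N. indicator {xs j<..xs (Suc j)} (fst z)) * (\<Sum>k<N. indicator {xs k<..xs (Suc k)} (snd z))"
        by (simp add: sum_product)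
      also have "\<dots> = indicator (Bx R) z"
        unfolding sum_indicator_intervals[OF xs_mono] xs0 xsN Bx_def by (simp add: indicator_times)
      finally show ?thesis .
    qed
    have cellB: "cell p \<subseteq> Bx R" if "p \<in> I" for p
    proof -
      have "xs (fst p) \<ge> -R" "xs (Suc (fst p)) \<le> R" "xs (snd p) \<ge> -R" "xs (Suc (snd p)) \<le> R"
        using xs_range that by (auto simp: I_def)
      then show ?thesis unfolding cell_def Bx_def by auto
    qed
    have close: "\<bar>h z - h (cn p)\<bar> < \<epsilon>" if "p \<in> I" "z \<in> cell p" for p z
    proof -
      obtain j k where p: "p = (j, k)" by (cases p)
      obtain z1 z2 where z: "z = (z1, z2)" by (cases z)
      have jk: "j < N" "k < N" using that p by (auto simp: I_def)
      have z1: "xs j < z1" "z1 \<le> xs (Suc j)" and z2: "xs k < z2" "z2 \<le> xs (Suc k)"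
        using that p z by (auto simp: cell_def)
      have d1: "dist z1 (xs j) \<le> 2 * R / N" using z1 xs_step[of j] by (simp add: dist_real_def)
      have d2: "dist z2 (xs k) \<le> 2 * R / N" using z2 xs_step[of k] by (simp add: dist_real_def)
      have "dist z (cn p) = sqrt ((dist z1 (xs j))\<^sup>2 + (dist z2 (xs k))\<^sup>2)"
        by (simp add: z p cn_def dist_Pair_Pair)
      also have "\<dots> \<le> \<bar>dist z1 (xs j)\<bar> + \<bar>dist z2 (xs k)\<bar>" by (rule sqrt_sum_squares_le_sum_abs)
      also have "\<dots> \<le> 4 * R / N" using d1 d2 by simp
      finally have "dist z (cn p) < \<delta>" using Nd by simp
      moreover have "cn p \<in> S" using xs_range jk by (auto simp: S_def cn_def p)
      moreover have "z \<in> S" using cellB[OF that(1)] that(2) by (auto simp: S_def Bx_def)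
      ultimately have "dist (h z) (h (cn p)) < \<epsilon>" using \<delta>(2) by blast
      then show ?thesis by (simp add: dist_real_def)
    qed
    have hs: "\<bar>h z - s z\<bar> \<le> \<epsilon> + K * (1 - indicator (Bx R) z)" for z
    proof (cases "z \<in> Bx R")
      case True
      then have p1: "(\<Sum>p\<in>I. indicator (cell p) z :: real) = 1" using part by simp
      have "h z - s z = (\<Sum>p\<in>I. (h z - h (cn p)) * indicator (cell p) z)"
        unfolding s_def using p1 by (simp add: algebra_simps sum_subtractf sum_distrib_left[symmetric])
      also have "\<bar>\<dots>\<bar> \<le> (\<Sum>p\<in>I. \<bar>(h z - h (cn p)) * indicator (cell p) z\<bar>)" by (rule sum_abs)
      also have "\<dots> \<le> (\<Sum>p\<in>I. \<epsilon> * indicator (cell p) z)"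
      proof (rule sum_mono)
        fix p assume pI: "p \<in> I"
        show "\<bar>(h z - h (cn p)) * indicator (cell p) z\<bar> \<le> \<epsilon> * indicator (cell p) z"
        proof (cases "z \<in> cell p")
          case True then show ?thesis using close[OF pI True] by simp
        qed simp
      qed
      also have "\<dots> = \<epsilon>" using p1 by (simp add: sum_distrib_left[symmetric])
      finally show ?thesis using True by simp
    next
      case False
      have "indicator (cell p) z = (0::real)" if "p \<in> I" for p using cellB[OF that] False by (auto simp: indicator_def)
      then have "s z = 0" unfolding s_def by (auto intro!: sum.neutral)
      then show ?thesis using False K(2)[of z] \<epsilon>p by simp
    qed
    have sm: "s \<in> borel_measurable borel" unfolding s_def using cells by measurable
    have sb: "\<bar>s z\<bar> \<le> (\<Sum>p\<in>I. \<bar>h (cn p)\<bar>)" for z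
    proof -
      have "\<bar>s z\<bar> \<le> (\<Sum>p\<in>I. \<bar>h (cn p) * indicator (cell p) z\<bar>)" unfolding s_def by (rule sum_abs)
      also have "\<dots> \<le> (\<Sum>p\<in>I. \<bar>h (cn p)\<bar>)" by (intro sum_mono) (auto simp: indicator_def)
      finally show ?thesis .
    qed
    have int_s: "(\<integral>z. s z \<partial>\<nu>) = (\<Sum>p\<in>I. h (cn p) * measure \<nu> (cell p))"
      if "prob_space \<nu>" "sets \<nu> = sets borel" for \<nu>
    proof -
      interpret prob_space \<nu> by fact
      have sp: "space \<nu> = UNIV" using sets_eq_imp_space_eq[OF that(2)] by simp
      have ci: "integrable \<nu> (indicator (cell p) :: _ \<Rightarrow> real)" for p
        using cells[of p] that(2) by (intro integrable_real_indicator) (auto simp: emeasure_eq_measure)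
      have "(\<integral>z. s z \<partial>\<nu>) = (\<Sum>p\<in>I. (\<integral>z. h (cn p) * indicator (cell p) z \<partial>\<nu>))"
        unfolding s_def by (rule Bochner_Integration.integral_sum) (use ci in auto)
      also have "\<dots> = (\<Sum>p\<in>I. h (cn p) * measure \<nu> (cell p))"
        by (intro sum.cong refl) (simp add: sp)
      finally show ?thesis .
    qed
    have sconv: "(\<lambda>n. \<integral>z. s z \<partial>\<mu> n) \<longlonglongrightarrow> (\<integral>z. s z \<partial>L)"
    proof -
      have "(\<lambda>n. \<Sum>p\<in>I. h (cn p) * measure (\<mu> n) (cell p)) \<longlonglongrightarrow> (\<Sum>p\<in>I. h (cn p) * measure L (cell p))"
      proof (intro tendsto_sum tendsto_mult_left)
        fix p
        have "xs (fst p) \<le> xs (Suc (fst p))" "xs (snd p) \<le> xs (Suc (snd p))" using xs_mono by (auto simp: mono_def)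
        then show "(\<lambda>n. measure (\<mu> n) (cell p)) \<longlonglongrightarrow> measure L (cell p)"
          unfolding cell_def by (rule cellconv)
      qed
      then show ?thesis using int_s[OF \<mu>p \<mu>s] int_s[OF Lp Ls] by simp
    qed
    have Bconv: "(\<lambda>n. measure (\<mu> n) (Bx R)) \<longlonglongrightarrow> measure L (Bx R)"
      unfolding Bx_def using Rp by (intro cellconv) auto
    have ev1: "eventually (\<lambda>n. measure (\<mu> n) (Bx R) > 1 - 2 * \<epsilon>) sequentially"
      using LB \<epsilon>p by (intro order_tendstoD(1)[OF Bconv]) simp
    have ev2: "eventually (\<lambda>n. dist (\<integral>z. s z \<partial>\<mu> n) (\<integral>z. s z \<partial>L) < \<epsilon>) sequentially"
      using tendstoD[OF sconv \<epsilon>p] .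
    show "eventually (\<lambda>n. dist (\<integral>z. h z \<partial>\<mu> n) (\<integral>z. h z \<partial>L) < e) sequentially"
      using ev1 ev2
    proof eventually_elim
      case (elim n)
      have a1: "\<bar>(\<integral>z. h z \<partial>\<mu> n) - (\<integral>z. s z \<partial>\<mu> n)\<bar> \<le> \<epsilon> + K * (1 - measure (\<mu> n) (Bx R))"
        by (rule approx_integral[OF \<mu>p \<mu>s hm sm K(2) sb Bxs hs])
      have a2: "\<bar>(\<integral>z. h z \<partial>L) - (\<integral>z. s z \<partial>L)\<bar> \<le> \<epsilon> + K * (1 - measure L (Bx R))"
        by (rule approx_integral[OF Lp Ls hm sm K(2) sb Bxs hs])
      have b1: "K * (1 - measure (\<mu> n) (Bx R)) \<le> K * (2 * \<epsilon>)" using elim K by (intro mult_left_mono) auto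
      have b2: "K * (1 - measure L (Bx R)) \<le> K * \<epsilon>" using LB K by (intro mult_left_mono) auto
      have "3 * \<epsilon> + 3 * K * \<epsilon> < e"
      proof -
        have "(3 + 3 * K) * \<epsilon> < (4 * K + 4) * \<epsilon>" using \<epsilon>p K by (intro mult_strict_right_mono) auto
        also have "\<dots> = e" using K by (simp add: \<epsilon>_def)
        finally show ?thesis by (simp add: algebra_simps)
      qed
      then show ?case using a1 a2 b1 b2 elim by (simp add: dist_real_def)
    qed
  qed
qed

context fixes a :: real assumes apos: "a > 0" begin

lemma frechet_mono: "x \<le> y \<Longrightarrow> frechet_cdf a x \<le> frechet_cdf a y"
proof (cases "x > 0")
  case True
  assume xy: "x \<le> y"
  have "y powr (-a) \<le> x powr (-a)" using powr_mono2'[of "-a" x y] apos True xy by simp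
  then show ?thesis using True xy by (simp add: frechet_cdf_def)
next
  case False
  then show "frechet_cdf a x \<le> frechet_cdf a y" by (simp add: frechet_cdf_def)
qed

lemma frechet_cont_pos: assumes "t > 0" shows "isCont (frechet_cdf a) t"
proof -
  have "eventually (\<lambda>x. x > 0) (nhds t)" using eventually_nhds_in_open[of "{0<..}" t] assms by simp
  then have "eventually (\<lambda>x. frechet_cdf a x = exp (- (x powr (-a)))) (nhds t)"
    by eventually_elim (simp add: frechet_cdf_def)
  moreover have "isCont (\<lambda>x. exp (- (x powr (-a)))) t" using assms by (intro continuous_intros) auto
  ultimately show ?thesis using isCont_cong[of "frechet_cdf a" "\<lambda>x. exp (- (x powr (-a)))" t] by simp
qed

lemma frechet_at_right_0: "((\<lambda>t. exp (- (t powr (-a)))) \<longlongrightarrow> 0) (at_right 0)"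
proof -
  have "((\<lambda>t::real. t powr a) \<longlongrightarrow> 0) (at_right 0)"
  proof (rule tendsto_zero_powrI[where b=a])
    show "eventually (\<lambda>t::real. 0 \<le> t) (at_right 0)" using eventually_at_right_less[of 0] by (auto elim: eventually_mono)
  qed (auto simp: apos intro: tendsto_ident_at)
  moreover have "eventually (\<lambda>t::real. 0 < t powr a) (at_right 0)"
    using eventually_at_right_less[of 0] by (auto elim: eventually_mono)
  ultimately have f1: "LIM t at_right 0. inverse (t powr a) :> at_top" by (rule filterlim_inverse_at_top)
  have ev1: "eventually (\<lambda>t::real. inverse (t powr a) = t powr (-a)) (at_right 0)"
    by (simp add: powr_minus)
  have "LIM t at_right 0. t powr (-a) :> at_top" using filterlim_cong[OF refl refl ev1] f1 by simp
  then have "LIM t at_right 0. - (t powr (-a)) :> at_bot" by (simp add: filterlim_uminus_at_bot)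
  then show ?thesis by (rule filterlim_compose[OF exp_at_bot])
qed

lemma frechet_right_cont: "continuous (at_right t) (frechet_cdf a)"
proof (cases "t > 0")
  case True then show ?thesis using frechet_cont_pos continuous_at_split by blast
next
  case False
  show ?thesis
  proof (cases "t = 0")
    case True
    have "((frechet_cdf a) \<longlongrightarrow> 0) (at_right 0)"
    proof (rule Lim_transform_eventually[OF frechet_at_right_0])
      show "eventually (\<lambda>x. exp (- (x powr (-a))) = frechet_cdf a x) (at_right 0)"
        by (simp add: eventually_at_right_less frechet_cdf_def)
    qed
    then show ?thesis using True by (simp add: continuous_within frechet_cdf_def)
  next
    case False
    with \<open>\<not> t > 0\<close> have tn: "t < 0" by simp
    have "eventually (\<lambda>x. x < 0) (nhds t)" using eventually_nhds_in_open[of "{..<0}" t] tn by simp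
    then have "eventually (\<lambda>x. frechet_cdf a x = 0) (nhds t)" by eventually_elim (simp add: frechet_cdf_def)
    then have "isCont (frechet_cdf a) t" using isCont_cong[of "frechet_cdf a" "\<lambda>_. 0" t] by simp
    then show ?thesis using continuous_at_split by blast
  qed
qed

lemma frechet_bot: "((frechet_cdf a) \<longlongrightarrow> 0) at_bot"
proof (rule tendsto_eventually)
  show "eventually (\<lambda>x. frechet_cdf a x = 0) at_bot"
    using eventually_le_at_bot[of 0] by eventually_elim (simp add: frechet_cdf_def)
qed

lemma frechet_top: "((frechet_cdf a) \<longlongrightarrow> 1) at_top"
proof -
  have "((\<lambda>t::real. t powr (-a)) \<longlongrightarrow> 0) at_top" using apos by (intro tendsto_neg_powr filterlim_ident) auto
  then have "((\<lambda>t::real. exp (- (t powr (-a)))) \<longlongrightarrow> exp (- 0)) at_top" by (intro tendsto_intros)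
  moreover have "eventually (\<lambda>t. exp (- (t powr (-a))) = frechet_cdf a t) at_top"
    using eventually_gt_at_top[of 0] by eventually_elim (simp add: frechet_cdf_def)
  ultimately show ?thesis by (simp add: tendsto_cong)
qed

lemma frechet_real_dist: "real_distribution (frechet a)"
  unfolding frechet_def
  by (rule real_distribution_interval_measure) (auto intro: frechet_mono frechet_right_cont frechet_bot frechet_top)

lemma frechet_Iic: "measure (frechet a) {..x} = frechet_cdf a x"
  unfolding frechet_def
  by (rule measure_interval_measure_Iic) (auto intro: frechet_mono frechet_right_cont frechet_bot)

lemma frechet_sets: "sets (frechet a) = sets borel"
  by (simp add: frechet_def)

end

lemma frechet_pair:
  assumes a: "a > 0" and b: "b > 0"
  shows "prob_space (frechet a \<Otimes>\<^sub>M frechet b)"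
    and "sets (frechet a \<Otimes>\<^sub>M frechet b) = sets (borel :: (real \<times> real) measure)"
    and "measure (frechet a \<Otimes>\<^sub>M frechet b) ({..x} \<times> {..y}) = frechet_cdf a x * frechet_cdf b y"
proof -
  interpret A: real_distribution "frechet a" by (rule frechet_real_dist[OF a])
  interpret B: real_distribution "frechet b" by (rule frechet_real_dist[OF b])
  interpret AB: pair_prob_space "frechet a" "frechet b" by unfold_locales
  show "prob_space (frechet a \<Otimes>\<^sub>M frechet b)" by unfold_locales
  have "sets (frechet a \<Otimes>\<^sub>M frechet b) = sets (borel \<Otimes>\<^sub>M borel)"
    by (rule sets_pair_measure_cong) (simp_all add: frechet_sets a b)
  then show "sets (frechet a \<Otimes>\<^sub>M frechet b) = sets (borel :: (real \<times> real) measure)"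
    by (metis borel_prod)
  have "emeasure (frechet a \<Otimes>\<^sub>M frechet b) ({..x} \<times> {..y}) = emeasure (frechet a) {..x} * emeasure (frechet b) {..y}"
    by (rule B.emeasure_pair_measure_Times) (simp_all add: frechet_sets a b)
  then show "measure (frechet a \<Otimes>\<^sub>M frechet b) ({..x} \<times> {..y}) = frechet_cdf a x * frechet_cdf b y"
  proof -
    assume h: "emeasure (frechet a \<Otimes>\<^sub>M frechet b) ({..x} \<times> {..y}) = emeasure (frechet a) {..x} * emeasure (frechet b) {..y}"
    have "ennreal (measure (frechet a \<Otimes>\<^sub>M frechet b) ({..x} \<times> {..y})) = ennreal (frechet_cdf a x * frechet_cdf b y)"
      using h by (simp add: A.emeasure_eq_measure B.emeasure_eq_measure AB.P.emeasure_eq_measure ennreal_mult[symmetric]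
        frechet_Iic a b frechet_cdf_def)
    moreover have "frechet_cdf a x * frechet_cdf b y \<ge> 0" by (simp add: frechet_cdf_def)
    ultimately show ?thesis by simp
  qed
qed

context ana begin

lemma G_mono: assumes "0 < s" "s \<le> t" shows "gamma_plus M f g t \<le> gamma_plus M f g s"
proof -
  have "hh t \<le> hh s" by (rule hh_mono[OF assms(2)])
  moreover have "hh t \<ge> 0" by (rule hh_nn)
  ultimately have "hh t / t \<le> hh s / s" using assms by (intro frac_le) auto
  then show ?thesis by (simp add: gamma_eq)
qed

lemma G_nn: "t > 0 \<Longrightarrow> gamma_plus M f g t \<ge> 0"
  using hh_nn by (simp add: gamma_eq)

lemma G_le: "t > 0 \<Longrightarrow> gamma_plus M f g t \<le> 1 / t"
  using hh_le1 by (simp add: gamma_eq divide_right_mono)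

lemma CC_ratio: "((\<lambda>t. CC t / t) \<longlongrightarrow> 1) at_top"
proof (rule tendsto_sandwich[where f="\<lambda>t. 1" and h="\<lambda>t. 1 + 1 / t"])
  show "eventually (\<lambda>t. 1 \<le> CC t / t) at_top"
    using eventually_gt_at_top[of 0]
  proof eventually_elim
    case (elim t)
    then have "t \<le> CC t" by (rule CC_bounds)
    then show ?case using elim by simp
  qed
  show "eventually (\<lambda>t. CC t / t \<le> 1 + 1 / t) at_top"
    using eventually_gt_at_top[of 0]
  proof eventually_elim
    case (elim t)
    then have "CC t \<le> 1 + t" by (rule CC_bounds)
    then have "CC t / t \<le> (1 + t) / t" using elim by (intro divide_right_mono) auto
    also have "\<dots> = 1 + 1 / t" using elim by (simp add: field_simps)
    finally show ?case .
  qed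
  have "((\<lambda>t::real. 1 + 1 / t) \<longlongrightarrow> 1 + 0) at_top" by (intro tendsto_intros tendsto_divide_0[OF tendsto_const] filterlim_at_top_imp_at_infinity[OF filterlim_ident])
  then show "((\<lambda>t::real. 1 + 1 / t) \<longlongrightarrow> 1) at_top" by simp
qed simp

lemma regvar_pos: assumes "regvar (gamma_plus M f g) (-a)" "t > 0" shows "gamma_plus M f g t > 0"
proof (rule ccontr)
  assume "\<not> ?thesis"
  then have z: "gamma_plus M f g t = 0" using G_nn[OF assms(2)] by simp
  have zz: "gamma_plus M f g s = 0" if "s \<ge> t" for s
    using G_mono[OF assms(2) that] G_nn[of s] z that assms(2) by simp
  have l: "((\<lambda>s. gamma_plus M f g (s * 2) / gamma_plus M f g s) \<longlongrightarrow> 2 powr (-a)) at_top"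
    by (rule assms(1)[unfolded regvar_def, rule_format]) simp
  have e: "eventually (\<lambda>s. gamma_plus M f g (s * 2) / gamma_plus M f g s = 0) at_top"
    using eventually_ge_at_top[of t] by eventually_elim (simp add: zz)
  have "((\<lambda>s::real. 0::real) \<longlongrightarrow> 2 powr (-a)) at_top" using Lim_transform_eventually[OF l e] by simp
  then have "2 powr (-a) = (0::real)" by (simp add: tendsto_const_iff)
  then show False by simp
qed

end


lemma ln_one_minus_le: fixes z :: real assumes "z < 1" shows "ln (1 - z) \<le> - z"
  using ln_le_minus_one[of "1 - z"] assms by simp

lemma ln_one_minus_ge: fixes z :: real assumes "0 \<le> z" "z < 1" shows "- z / (1 - z) \<le> ln (1 - z)"
proof -
  have "ln (1 / (1 - z)) \<le> 1 / (1 - z) - 1" using ln_le_minus_one[of "1 / (1 - z)"] assms by simp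
  moreover have "ln (1 / (1 - z)) = - ln (1 - z)" using assms by (simp add: ln_div)
  moreover have "1 / (1 - z) - 1 = z / (1 - z)" using assms by (simp add: field_simps)
  ultimately have "- (z / (1 - z)) \<le> ln (1 - z)" by linarith
  then show ?thesis by simp
qed

lemma pow_lim:
  fixes z :: "nat \<Rightarrow> real"
  assumes lim: "(\<lambda>n. real n * z n) \<longlonglongrightarrow> l" and nn: "eventually (\<lambda>n. 0 \<le> z n) sequentially"
  shows "(\<lambda>n. (1 - z n) ^ n) \<longlonglongrightarrow> exp (- l)"
proof -
  have z0: "z \<longlonglongrightarrow> 0"
  proof -
    have "(\<lambda>n. (real n * z n) * inverse (real n)) \<longlonglongrightarrow> l * 0"
      by (intro tendsto_intros lim tendsto_inverse_0_at_top filterlim_real_sequentially)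
    moreover have "eventually (\<lambda>n. (real n * z n) * inverse (real n) = z n) sequentially"
      using eventually_gt_at_top[of 0] by eventually_elim simp
    ultimately show ?thesis using Lim_transform_eventually by fastforce
  qed
  have small: "eventually (\<lambda>n. z n < 1/2) sequentially" using z0 by (intro order_tendstoD) auto
  have upper: "(\<lambda>n. real n * z n * (- 1)) \<longlonglongrightarrow> l * (- 1)" by (intro tendsto_intros lim)
  have lower: "(\<lambda>n. real n * z n * (- 1 / (1 - z n))) \<longlonglongrightarrow> l * (- 1 / (1 - 0))"
    by (intro tendsto_intros lim z0) auto
  have "(\<lambda>n. real n * ln (1 - z n)) \<longlonglongrightarrow> - l"
  proof (rule tendsto_sandwich[where f="\<lambda>n. real n * z n * (- 1 / (1 - z n))" and h="\<lambda>n. real n * z n * (- 1)"])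
    show "(\<lambda>n. real n * z n * (- 1 / (1 - z n))) \<longlonglongrightarrow> - l" using lower by simp
    show "(\<lambda>n. real n * z n * (- 1)) \<longlonglongrightarrow> - l" using upper by simp
    show "eventually (\<lambda>n. real n * z n * (- 1 / (1 - z n)) \<le> real n * ln (1 - z n)) sequentially"
      using nn small
    proof eventually_elim
      case (elim n)
      have "real n * (- z n / (1 - z n)) \<le> real n * ln (1 - z n)"
        using ln_one_minus_ge[of "z n"] elim by (intro mult_left_mono) auto
      moreover have "real n * z n * (- 1 / (1 - z n)) = real n * (- z n / (1 - z n))" by simp
      ultimately show ?case by linarith
    qed
    show "eventually (\<lambda>n. real n * ln (1 - z n) \<le> real n * z n * (- 1)) sequentially"
      using small
    proof eventually_elim
      case (elim n)
      have "real n * ln (1 - z n) \<le> real n * (- z n)"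
        using ln_one_minus_le[of "z n"] elim by (intro mult_left_mono) auto
      then show ?case by simp
    qed
  qed
  then have "(\<lambda>n. exp (real n * ln (1 - z n))) \<longlonglongrightarrow> exp (- l)" by (intro tendsto_intros)
  moreover have "eventually (\<lambda>n. exp (real n * ln (1 - z n)) = (1 - z n) ^ n) sequentially"
    using small by eventually_elim (simp add: ln_realpow[symmetric])
  ultimately show ?thesis using Lim_transform_eventually by fastforce
qed

locale side = ana M f g for M :: "'a measure" and f g +
  fixes P :: "'w measure" and A B :: "nat \<Rightarrow> 'w \<Rightarrow> real"
  assumes P_prob: "prob_space P"
    and A_meas: "\<And>i. i \<ge> 1 \<Longrightarrow> A i \<in> borel_measurable P"
    and B_meas: "\<And>i. i \<ge> 1 \<Longrightarrow> B i \<in> borel_measurable P"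
    and cdfAB: "\<And>i x y. i \<ge> 1 \<Longrightarrow> x > 0 \<Longrightarrow> y > 0 \<Longrightarrow>
        measure P {w \<in> space P. A i w \<le> x \<and> B i w \<le> y} = exp (- (\<integral>s. max (f s / x) (g s / y) \<partial>M))"
    and indepAB: "prob_space.indep_vars P (\<lambda>_. borel) (\<lambda>i w. (A i w, B i w)) {1..}"
begin

interpretation prob_space P by (rule P_prob)

lemma pr_i: "i \<ge> 1 \<Longrightarrow> pr M f g P (A i) (B i)"
  unfolding pr_def pr_axioms_def using ana_axioms P_prob A_meas B_meas cdfAB by auto

definition pp :: "nat \<Rightarrow> real \<Rightarrow> real" where
  "pp i s = prob {w \<in> space P. A i w / B i w > s}"

lemma pp_bounds: assumes "i \<ge> 1" "s > 0" "q > 1"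
  shows "s * gamma_plus M f g (q * s) / CC s \<le> pp i s" "pp i s \<le> s * gamma_plus M f g (s / q) / CC s"
proof -
  interpret pr M f g P "A i" "B i" by (rule pr_i[OF assms(1)])
  show "s * gamma_plus M f g (q * s) / CC s \<le> pp i s" "pp i s \<le> s * gamma_plus M f g (s / q) / CC s"
    using p_bounds[OF assms(2,3)] by (simp_all add: pp_def)
qed

lemma pp_lower_hh: assumes "i \<ge> 1" "s > 0" "q > 1"
  shows "hh (q * s) / (q * CC s) \<le> pp i s"
proof -
  interpret pr M f g P "A i" "B i" by (rule pr_i[OF assms(1)])
  show ?thesis using p_lower[OF assms(2,3)] p_eq[of s] assms by (simp add: pp_def)
qed

lemma pp_le1: "pp i s \<le> 1" by (simp add: pp_def)
lemma pp_nn: "pp i s \<ge> 0" by (simp add: pp_def)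

lemma ratio_pos: assumes "i \<ge> 1" shows "AE w in P. A i w / B i w > 0"
proof -
  interpret pr M f g P "A i" "B i" by (rule pr_i[OF assms(1)])
  show ?thesis using AE_A_pos AE_B_pos by eventually_elim simp
qed

lemma ratio_meas[measurable]: "i \<ge> 1 \<Longrightarrow> (\<lambda>w. A i w / B i w) \<in> borel_measurable P"
  using A_meas B_meas by measurable

lemma pair_meas: "i \<ge> 1 \<Longrightarrow> (\<lambda>w. (A i w, B i w)) \<in> borel_measurable P"
  using A_meas B_meas by measurable

lemma indep_prod:
  assumes n: "n \<ge> 1" and S: "S \<in> sets (borel :: (real \<times> real) measure)"
  shows "prob (\<Inter>i\<in>{1..n}. {w \<in> space P. (A i w, B i w) \<in> S}) = (\<Prod>i\<in>{1..n}. prob {w \<in> space P. (A i w, B i w) \<in> S})"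
proof -
  have ind: "indep_sets (\<lambda>i. {(\<lambda>w. (A i w, B i w)) -` T \<inter> space P | T. T \<in> sets borel}) {1..}"
    using indepAB unfolding indep_vars_def2 by simp
  have eq: "{w \<in> space P. (A i w, B i w) \<in> S} = (\<lambda>w. (A i w, B i w)) -` S \<inter> space P" for i by auto
  have "prob (\<Inter>i\<in>{1..n}. (\<lambda>w. (A i w, B i w)) -` S \<inter> space P) = (\<Prod>i\<in>{1..n}. prob ((\<lambda>w. (A i w, B i w)) -` S \<inter> space P))"
    by (rule indep_setsD[OF ind]) (use n S in auto)
  then show ?thesis by (simp add: eq)
qed

definition MaxA :: "nat \<Rightarrow> 'w \<Rightarrow> real" where
  "MaxA n w = Max ((\<lambda>i. A i w / B i w) ` {1..n})"

lemma MaxA_meas[measurable]: "MaxA n \<in> borel_measurable P"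
  unfolding MaxA_def by (rule borel_measurable_Max) (auto intro: ratio_meas)

lemma marg: assumes n: "n \<ge> 1" and k: "\<kappa> > 0"
  shows "prob {w \<in> space P. MaxA n w / \<kappa> \<le> y} = (\<Prod>i\<in>{1..n}. 1 - pp i (\<kappa> * y))"
proof -
  define S where "S = {z :: real \<times> real. fst z / snd z \<le> \<kappa> * y}"
  have fm: "(\<lambda>z::real \<times> real. fst z / snd z) \<in> borel_measurable borel"
    by (intro borel_measurable_divide borel_measurable_continuous_onI continuous_intros)
  have Sm: "S \<in> sets borel" using measurable_sets[OF fm, of "{..\<kappa> * y}"] by (simp add: S_def vimage_def)
  have "{w \<in> space P. MaxA n w / \<kappa> \<le> y} = (\<Inter>i\<in>{1..n}. {w \<in> space P. (A i w, B i w) \<in> S})"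
    using n k by (auto simp: MaxA_def S_def pos_divide_le_eq mult.commute)
  moreover have "prob {w \<in> space P. (A i w, B i w) \<in> S} = 1 - pp i (\<kappa> * y)" if "i \<ge> 1" for i
  proof -
    have "{w \<in> space P. (A i w, B i w) \<in> S} = space P - {w \<in> space P. A i w / B i w > \<kappa> * y}"
      by (auto simp: S_def)
    then show ?thesis using that by (simp add: prob_compl pp_def)
  qed
  ultimately show ?thesis using indep_prod[OF n Sm] by simp
qed

end

context side begin

interpretation prob_space P by (rule P_prob)

lemma kc_top: fixes \<kappa> :: "nat \<Rightarrow> real" and c :: real
  assumes "filterlim \<kappa> at_top sequentially" "c > 0"
  shows "filterlim (\<lambda>n. \<kappa> n * c) at_top sequentially"
  using filterlim_tendsto_pos_mult_at_top[OF tendsto_const[of c] assms(2) assms(1)] by (simp add: mult.commute)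

lemma CCk: fixes \<kappa> :: "nat \<Rightarrow> real" and c :: real
  assumes "filterlim \<kappa> at_top sequentially" "c > 0"
  shows "(\<lambda>n. CC (\<kappa> n * c) / (\<kappa> n * c)) \<longlonglongrightarrow> 1"
  using filterlim_compose[OF CC_ratio kc_top[OF assms]] by simp

lemma CCk': fixes \<kappa> :: "nat \<Rightarrow> real" and c :: real
  assumes "filterlim \<kappa> at_top sequentially" "c > 0"
  shows "(\<lambda>n. (\<kappa> n * c) / CC (\<kappa> n * c)) \<longlonglongrightarrow> 1"
  using tendsto_inverse[OF CCk[OF assms]] by (simp add: inverse_eq_divide)

lemma side_fwd:
  assumes a: "a > 0" and rv: "regvar (gamma_plus M f g) (-a)"
    and eq: "\<kappa> \<sim>[sequentially] (\<lambda>n. geninv (\<lambda>t. 1 / gamma_plus M f g t) (real n))"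
  shows "filterlim \<kappa> at_top sequentially"
    and "\<And>y q. y > 0 \<Longrightarrow> q > 1 \<Longrightarrow> (\<lambda>n. real n * ((\<kappa> n * y) * gamma_plus M f g (q * (\<kappa> n * y)) / CC (\<kappa> n * y))) \<longlonglongrightarrow> (q * y) powr (-a)"
    and "\<And>y q. y > 0 \<Longrightarrow> q > 1 \<Longrightarrow> (\<lambda>n. real n * ((\<kappa> n * y) * gamma_plus M f g ((\<kappa> n * y) / q) / CC (\<kappa> n * y))) \<longlonglongrightarrow> (y / q) powr (-a)"
proof -
  have Gpos: "\<And>t. t > 0 \<Longrightarrow> gamma_plus M f g t > 0" using regvar_pos[OF rv] by blast
  note S = seq_from_rv[OF G_mono Gpos G_le rv eq]
  show kt: "filterlim \<kappa> at_top sequentially" by (rule S(1))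
  fix y q :: real assume y: "y > 0" and q: "q > 1"
  have "(\<lambda>n. real n * gamma_plus M f g (\<kappa> n * (q * y)) * ((\<kappa> n * y) / CC (\<kappa> n * y))) \<longlonglongrightarrow> (q * y) powr (-a) * 1"
    using y q by (intro tendsto_intros S(2) CCk'[OF kt y]) auto
  then show "(\<lambda>n. real n * ((\<kappa> n * y) * gamma_plus M f g (q * (\<kappa> n * y)) / CC (\<kappa> n * y))) \<longlonglongrightarrow> (q * y) powr (-a)"
    by (simp add: mult_ac)
  have "(\<lambda>n. real n * gamma_plus M f g (\<kappa> n * (y / q)) * ((\<kappa> n * y) / CC (\<kappa> n * y))) \<longlonglongrightarrow> (y / q) powr (-a) * 1"
    using y q by (intro tendsto_intros S(2) CCk'[OF kt y]) auto
  then show "(\<lambda>n. real n * ((\<kappa> n * y) * gamma_plus M f g ((\<kappa> n * y) / q) / CC (\<kappa> n * y))) \<longlonglongrightarrow> (y / q) powr (-a)"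
    by (simp add: mult_ac)
qed

lemma CCpos: "t > 0 \<Longrightarrow> CC t > 0"
  using CC_bounds(1)[of t] by linarith

lemma side_bwd:
  fixes \<kappa> :: "nat \<Rightarrow> real"
  assumes a: "a > 0"
    and lim: "\<And>y. y > 0 \<Longrightarrow> (\<lambda>n. prob {w \<in> space P. MaxA n w / \<kappa> n \<le> y}) \<longlonglongrightarrow> exp (- (y powr (-a)))"
  shows "regvar (gamma_plus M f g) (-a)"
proof -
  define G where "G = gamma_plus M f g"
  define Pi where "Pi n y = prob {w \<in> space P. MaxA n w / \<kappa> n \<le> y}" for n y
  have limPi: "(\<lambda>n. Pi n y) \<longlonglongrightarrow> exp (- (y powr (-a)))" if "y > 0" for y
    using lim[OF that] by (simp add: Pi_def)
  have one: "Pi n 1 = 1" if n: "n \<ge> 1" and k: "\<kappa> n \<le> 0" for n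
  proof -
    have rp: "AE w in P. A 1 w / B 1 w > 0" by (rule ratio_pos) simp
    have "AE w in P. MaxA n w / \<kappa> n \<le> 1"
      using rp
    proof eventually_elim
      case (elim w)
      have "A 1 w / B 1 w \<le> MaxA n w" unfolding MaxA_def using n by (intro Max_ge) auto
      then have "MaxA n w > 0" using elim by linarith
      then have "MaxA n w / \<kappa> n \<le> 0" using k by (simp add: divide_nonpos_nonneg divide_nonneg_nonpos)
      then show ?case by simp
    qed
    then show ?thesis unfolding Pi_def by (subst prob_Collect_eq_1) auto
  qed
  have kpos: "eventually (\<lambda>n. \<kappa> n > 0) sequentially"
  proof -
    have "eventually (\<lambda>n. Pi n 1 < 1) sequentially"
      using limPi[of 1] by (intro order_tendstoD(2)) auto
    then show ?thesis using eventually_ge_at_top[of 1]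
      by eventually_elim (use one in force)
  qed
  have prodf: "eventually (\<lambda>n. \<forall>y. Pi n y = (\<Prod>i\<in>{1..n}. 1 - pp i (\<kappa> n * y))) sequentially"
    using kpos eventually_ge_at_top[of 1] by eventually_elim (simp add: Pi_def marg)
  obtain s0 where s0: "s0 > 0" "hh s0 > 0" using hh_pos_ex by blast
  have ktop: "filterlim \<kappa> at_top sequentially"
    unfolding filterlim_at_top
  proof
    fix Z :: real
    define K where "K = max Z 1"
    define y0 where "y0 = s0 / (2 * K)"
    have Kp: "K > 0" by (simp add: K_def)
    have y0p: "y0 > 0" using s0 Kp by (simp add: y0_def)
    define \<delta> where "\<delta> = hh s0 / (2 * (1 + s0))"
    have \<delta>p: "\<delta> > 0" using s0 by (simp add: \<delta>_def)
    have \<delta>1: "\<delta> < 1"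
    proof -
      have "hh s0 \<le> 1" by (rule hh_le1)
      moreover have "(1::real) < 2 * (1 + s0)" using s0 by simp
      ultimately have "hh s0 < 2 * (1 + s0)" by (rule le_less_trans)
      then show ?thesis using s0 by (simp add: \<delta>_def)
    qed
    define m where "m = exp (- (y0 powr (-a))) / 2"
    have mp: "m > 0" by (simp add: m_def)
    have ev1: "eventually (\<lambda>n. Pi n y0 > m) sequentially"
      using limPi[OF y0p] by (intro order_tendstoD(1)) (auto simp: m_def)
    have "(\<lambda>n. (1 - \<delta>) ^ n) \<longlonglongrightarrow> 0" using \<delta>p \<delta>1 by (intro LIMSEQ_power_zero) auto
    then have ev2: "eventually (\<lambda>n. (1 - \<delta>) ^ n < m) sequentially"
      using mp by (intro order_tendstoD(2)) auto
    show "eventually (\<lambda>n. Z \<le> \<kappa> n) sequentially"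
      using ev1 ev2 kpos prodf eventually_ge_at_top[of 1]
    proof eventually_elim
      case (elim n)
      show ?case
      proof (rule ccontr)
        assume "\<not> Z \<le> \<kappa> n"
        then have kK: "\<kappa> n \<le> K" by (simp add: K_def)
        define s where "s = \<kappa> n * y0"
        have sp: "s > 0" using elim y0p by (simp add: s_def)
        have s2: "2 * s \<le> s0"
        proof -
          have "s \<le> K * y0" unfolding s_def using kK y0p by (intro mult_right_mono) auto
          also have "K * y0 = s0 / 2" using Kp by (simp add: y0_def)
          finally show ?thesis by simp
        qed
        have pbig: "\<delta> \<le> pp i s" if "i \<in> {1..n}" for i
        proof -
          have "hh s0 \<le> hh (2 * s)" by (rule hh_mono[OF s2])
          moreover have "CC s \<le> 1 + s0" using CC_bounds(2)[OF sp] s2 sp by linarith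
          moreover have "CC s > 0" using CCpos[OF sp] .
          ultimately have "hh s0 / (2 * (1 + s0)) \<le> hh (2 * s) / (2 * CC s)"
            using hh_nn[of s0] by (intro frac_le) auto
          also have "\<dots> \<le> pp i s" using pp_lower_hh[of i s 2] that sp by simp
          finally show ?thesis by (simp add: \<delta>_def)
        qed
        have "Pi n y0 = (\<Prod>i\<in>{1..n}. 1 - pp i s)" using elim by (simp add: s_def)
        also have "\<dots> \<le> (\<Prod>i\<in>{1..n}. 1 - \<delta>)"
          by (intro prod_mono) (use pbig pp_le1 in \<open>auto simp: algebra_simps\<close>)
        also have "\<dots> = (1 - \<delta>) ^ n" by simp
        finally show False using elim by linarith
      qed
    qed
  qed
  have kt: "filterlim (\<lambda>n. \<kappa> n * c) at_top sequentially" if "c > 0" for c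
    by (rule kc_top[OF ktop that])
  have mlnPi: "(\<lambda>n. - ln (Pi n c)) \<longlonglongrightarrow> c powr (-a)" if "c > 0" for c
  proof -
    have "(\<lambda>n. - ln (Pi n c)) \<longlonglongrightarrow> - ln (exp (- (c powr (-a))))"
      by (intro tendsto_intros limPi[OF that]) simp
    then show ?thesis by simp
  qed
  have Gnn: "G t \<ge> 0" if "t > 0" for t using G_nn[OF that] by (simp add: G_def)
  have nG: "(\<lambda>n. real n * G (\<kappa> n * y)) \<longlonglongrightarrow> y powr (-a)" if y: "y > 0" for y
  proof (rule squeeze_q[where
        lo = "\<lambda>q n. (1 - G (\<kappa> n * y) * (\<kappa> n * (q * y)) / CC (\<kappa> n * (q * y))) * (- ln (Pi n (q * y))) * (CC (\<kappa> n * (q * y)) / (\<kappa> n * (q * y)))"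
    and hi = "\<lambda>q n. (- ln (Pi n (y / q))) * (CC (\<kappa> n * (y / q)) / (\<kappa> n * (y / q)))"
    and A = "\<lambda>q. (q * y) powr (-a)" and B = "\<lambda>q. (y / q) powr (-a)"])
    fix q :: real assume q: "q > 1"
    have hi0: "(\<lambda>n. G (\<kappa> n * y) * (\<kappa> n * (q * y)) / CC (\<kappa> n * (q * y))) \<longlonglongrightarrow> 0"
    proof (rule tendsto_sandwich[where f = "\<lambda>n. 0" and h = "\<lambda>n. inverse (\<kappa> n * y)"])
      show "eventually (\<lambda>n. 0 \<le> G (\<kappa> n * y) * (\<kappa> n * (q * y)) / CC (\<kappa> n * (q * y))) sequentially"
        using kpos
      proof eventually_elim
        case (elim n)
        then have p: "\<kappa> n * (q * y) > 0" "\<kappa> n * y > 0" using q y by auto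
        have "G (\<kappa> n * y) * (\<kappa> n * (q * y)) \<ge> 0" using Gnn[OF p(2)] p(1) by simp
        then show ?case using CCpos[OF p(1)] by simp
      qed
      show "eventually (\<lambda>n. G (\<kappa> n * y) * (\<kappa> n * (q * y)) / CC (\<kappa> n * (q * y)) \<le> inverse (\<kappa> n * y)) sequentially"
        using kpos
      proof eventually_elim
        case (elim n)
        have p1: "\<kappa> n * (q * y) > 0" "\<kappa> n * y > 0" using elim q y by auto
        have "(\<kappa> n * (q * y)) / CC (\<kappa> n * (q * y)) \<le> 1"
          using CC_bounds(1)[OF p1(1)] p1 by simp
        moreover have "G (\<kappa> n * y) \<le> inverse (\<kappa> n * y)" using G_le[OF p1(2)] by (simp add: G_def inverse_eq_divide)
        ultimately have "G (\<kappa> n * y) * ((\<kappa> n * (q * y)) / CC (\<kappa> n * (q * y))) \<le> inverse (\<kappa> n * y) * 1"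
          using Gnn[OF p1(2)] p1 CCpos[OF p1(1)] by (intro mult_mono) auto
        then show ?case by simp
      qed
      show "(\<lambda>n. inverse (\<kappa> n * y)) \<longlonglongrightarrow> 0" by (rule tendsto_inverse_0_at_top[OF kt[OF y]])
    qed simp
    show "(\<lambda>n. (1 - G (\<kappa> n * y) * (\<kappa> n * (q * y)) / CC (\<kappa> n * (q * y))) * (- ln (Pi n (q * y))) * (CC (\<kappa> n * (q * y)) / (\<kappa> n * (q * y))))
        \<longlonglongrightarrow> (q * y) powr (-a)"
    proof -
      have "(\<lambda>n. (1 - G (\<kappa> n * y) * (\<kappa> n * (q * y)) / CC (\<kappa> n * (q * y))) * (- ln (Pi n (q * y))) * (CC (\<kappa> n * (q * y)) / (\<kappa> n * (q * y))))
        \<longlonglongrightarrow> (1 - 0) * (q * y) powr (-a) * 1"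
        using q y by (intro tendsto_intros hi0 mlnPi CCk[OF ktop]) auto
      then show ?thesis by simp
    qed
    show "(\<lambda>n. (- ln (Pi n (y / q))) * (CC (\<kappa> n * (y / q)) / (\<kappa> n * (y / q)))) \<longlonglongrightarrow> (y / q) powr (-a)"
    proof -
      have "(\<lambda>n. (- ln (Pi n (y / q))) * (CC (\<kappa> n * (y / q)) / (\<kappa> n * (y / q)))) \<longlonglongrightarrow> (y / q) powr (-a) * 1"
        using q y by (intro tendsto_intros mlnPi CCk[OF ktop]) auto
      then show ?thesis by simp
    qed
    have hi1: "eventually (\<lambda>n. G (\<kappa> n * y) * (\<kappa> n * (q * y)) / CC (\<kappa> n * (q * y)) < 1) sequentially"
      using hi0 by (intro order_tendstoD(2)) auto
    have Pip1: "eventually (\<lambda>n. Pi n (y / q) > 0) sequentially"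
      using order_tendstoD(1)[OF limPi[of "y/q"], of 0] q y by simp
    have Pip2: "eventually (\<lambda>n. Pi n (q * y) > 0) sequentially"
      using order_tendstoD(1)[OF limPi[of "q*y"], of 0] q y by simp
    show "eventually (\<lambda>n. (1 - G (\<kappa> n * y) * (\<kappa> n * (q * y)) / CC (\<kappa> n * (q * y))) * (- ln (Pi n (q * y))) * (CC (\<kappa> n * (q * y)) / (\<kappa> n * (q * y)))
          \<le> real n * G (\<kappa> n * y) \<and>
          real n * G (\<kappa> n * y) \<le> (- ln (Pi n (y / q))) * (CC (\<kappa> n * (y / q)) / (\<kappa> n * (y / q)))) sequentially"
      using kpos prodf eventually_ge_at_top[of 1] hi1 Pip1 Pip2
    proof eventually_elim
      case (elim n)
      have kp: "\<kappa> n > 0" and n1: "n \<ge> 1" using elim by auto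
      define s where "s = \<kappa> n * (y / q)"
      define s' where "s' = \<kappa> n * (q * y)"
      have sp: "s > 0" and s'p: "s' > 0" using kp q y by (auto simp: s_def s'_def)
      have qs: "q * s = \<kappa> n * y" using q by (simp add: s_def)
      have s'q: "s' / q = \<kappa> n * y" using q by (simp add: s'_def)
      define lo where "lo = s * G (\<kappa> n * y) / CC s"
      define hi where "hi = s' * G (\<kappa> n * y) / CC s'"
      have CCs: "CC s > 0" "CC s' > 0" using CCpos sp s'p by auto
      have lo_nn: "lo \<ge> 0" using sp CCs Gnn[of "\<kappa> n * y"] kp y by (simp add: lo_def)
      have hi_nn: "hi \<ge> 0" using s'p CCs Gnn[of "\<kappa> n * y"] kp y by (simp add: hi_def)
      have hi_lt: "hi < 1" using elim by (simp add: hi_def s'_def mult_ac)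
      have pplo: "lo \<le> pp i s" if "i \<in> {1..n}" for i
        using pp_bounds(1)[of i s q] that sp q by (simp add: lo_def qs G_def)
      have pphi: "pp i s' \<le> hi" if "i \<in> {1..n}" for i
        using pp_bounds(2)[of i s' q] that s'p q by (simp add: hi_def s'q G_def)
      have Pi1: "Pi n (y / q) = (\<Prod>i\<in>{1..n}. 1 - pp i s)" using elim by (simp add: s_def)
      have "Pi n (y / q) \<le> (\<Prod>i\<in>{1..n}. 1 - lo)"
        unfolding Pi1 by (intro prod_mono) (use pplo pp_le1 in \<open>auto simp: algebra_simps\<close>)
      then have Pile: "Pi n (y / q) \<le> (1 - lo) ^ n" by simp
      have lo1: "1 - lo > 0"
      proof -
        have "1 - lo \<ge> 1 - pp 1 s" using pplo[of 1] n1 by auto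
        then have "1 - lo \<ge> 0" using pp_le1[of 1 s] by linarith
        moreover have "1 - lo \<noteq> 0" using Pile elim n1 by (auto simp: power_0_left)
        ultimately show ?thesis by linarith
      qed
      have "ln (Pi n (y / q)) \<le> ln ((1 - lo) ^ n)" using Pile elim lo1 by simp
      also have "\<dots> = real n * ln (1 - lo)" using lo1 by (simp add: ln_realpow)
      also have "\<dots> \<le> real n * (- lo)" using ln_one_minus_le[of lo] lo1 by (intro mult_left_mono) auto
      finally have up1: "real n * lo \<le> - ln (Pi n (y / q))" by simp
      have eqlo: "real n * G (\<kappa> n * y) = real n * lo * (CC s / s)" using sp CCs by (simp add: lo_def field_simps)
      have UP: "real n * G (\<kappa> n * y) \<le> (- ln (Pi n (y / q))) * (CC s / s)"
        unfolding eqlo using up1 sp CCs by (intro mult_right_mono) auto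
      have Pi2: "Pi n (q * y) = (\<Prod>i\<in>{1..n}. 1 - pp i s')" using elim by (simp add: s'_def)
      have "(\<Prod>i\<in>{1..n}. 1 - hi) \<le> Pi n (q * y)"
        unfolding Pi2 by (intro prod_mono) (use pphi hi_lt in \<open>auto simp: algebra_simps\<close>)
      then have Pige: "(1 - hi) ^ n \<le> Pi n (q * y)" by simp
      have "real n * (- hi / (1 - hi)) \<le> real n * ln (1 - hi)"
        using ln_one_minus_ge[of hi] hi_nn hi_lt by (intro mult_left_mono) auto
      also have "\<dots> = ln ((1 - hi) ^ n)" using hi_lt by (simp add: ln_realpow)
      also have "\<dots> \<le> ln (Pi n (q * y))"
      proof (rule ln_mono[OF Pige])
        show "0 < (1 - hi) ^ n" using hi_lt by simp
      qed
      finally have "real n * (- hi / (1 - hi)) \<le> ln (Pi n (q * y))" .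
      then have lo1': "(1 - hi) * (- ln (Pi n (q * y))) \<le> real n * hi"
        using hi_lt by (simp add: field_simps)
      have eqhi: "real n * G (\<kappa> n * y) = real n * hi * (CC s' / s')" using s'p CCs by (simp add: hi_def field_simps)
      have LO: "(1 - hi) * (- ln (Pi n (q * y))) * (CC s' / s') \<le> real n * G (\<kappa> n * y)"
        unfolding eqhi using lo1' s'p CCs by (intro mult_right_mono) auto
      show ?case using UP LO by (simp add: s_def s'_def hi_def mult_ac)
    qed
  qed (use tendsto_at_right_1_powr[OF y] in auto)
  have Gpos: "G t > 0" if t: "t > 0" for t
  proof -
    have "eventually (\<lambda>n. real n * G (\<kappa> n * 1) > 0) sequentially"
      using nG[of 1] by (intro order_tendstoD(1)) auto
    moreover have "eventually (\<lambda>n. t \<le> \<kappa> n) sequentially" using ktop by (simp add: filterlim_at_top)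
    ultimately have "eventually (\<lambda>n. real n * G (\<kappa> n * 1) > 0 \<and> t \<le> \<kappa> n) sequentially" by (rule eventually_conj)
    then obtain n where n: "real n * G (\<kappa> n) > 0" "t \<le> \<kappa> n" by (auto dest: eventually_happens)
    have "G (\<kappa> n) > 0" using n(1) by (simp add: zero_less_mult_iff)
    moreover have "G (\<kappa> n) \<le> G t" using G_mono[OF t n(2)] by (simp add: G_def)
    ultimately show ?thesis by simp
  qed
  show ?thesis
    using rv_from_seq[of G \<kappa> a] G_mono Gpos ktop nG by (simp add: G_def)
qed

end

lemma distr_pair_snd':
  assumes "prob_space N" "prob_space M"
  shows "distr (N \<Otimes>\<^sub>M M) M snd = M"
proof (intro measure_eqI)
  interpret N: prob_space N by fact
  interpret M: prob_space M by fact
  fix A assume A: "A \<in> sets (distr (N \<Otimes>\<^sub>M M) M snd)"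
  from A have "emeasure (distr (N \<Otimes>\<^sub>M M) M snd) A = emeasure (N \<Otimes>\<^sub>M M) (space N \<times> A)"
    by (auto simp add: emeasure_distr space_pair_measure dest: sets.sets_into_space intro!: arg_cong2[where f=emeasure])
  with A show "emeasure (distr (N \<Otimes>\<^sub>M M) M snd) A = emeasure M A"
    by (simp add: M.emeasure_pair_measure_Times N.emeasure_space_1)
qed simp

lemma marg_weak:
  fixes \<mu> :: "nat \<Rightarrow> (real \<times> real) measure" and L :: "(real \<times> real) measure" and p :: "real \<times> real \<Rightarrow> real"
  assumes wc: "weak_conv \<mu> L" and \<mu>p: "\<And>n. prob_space (\<mu> n)" and \<mu>s: "\<And>n. sets (\<mu> n) = sets borel"
    and Lp: "prob_space L" and Ls: "sets L = sets borel"
    and pc: "continuous_on UNIV p"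
    and F: "distr L borel p = F1" and Fd: "real_distribution F1"
    and c: "isCont (cdf F1) x"
  shows "(\<lambda>n. measure (\<mu> n) {z. p z \<le> x}) \<longlonglongrightarrow> cdf F1 x"
proof -
  have pm: "p \<in> borel_measurable borel" using pc by (rule borel_measurable_continuous_onI)
  have pmn: "p \<in> measurable (\<mu> n) borel" for n by (subst measurable_cong_sets[OF \<mu>s refl]) (rule pm)
  have pmL: "p \<in> measurable L borel" by (subst measurable_cong_sets[OF Ls refl]) (rule pm)
  have rd: "real_distribution (distr (\<mu> n) borel p)" for n
  proof -
    interpret prob_space "\<mu> n" by (rule \<mu>p)
    show ?thesis unfolding real_distribution_def real_distribution_axioms_def
      using prob_space_distr[OF pmn] by simp
  qed
  have "Weak_Convergence.weak_conv_m (\<lambda>n. distr (\<mu> n) borel p) F1"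
  proof (rule integral_bdd_continuous_conv_imp_weak_conv[OF rd Fd])
    fix \<phi> :: "real \<Rightarrow> real" assume \<phi>c: "\<And>x. isCont \<phi> x" and \<phi>b: "\<And>x. \<bar>\<phi> x\<bar> \<le> 1"
    have \<phi>m: "\<phi> \<in> borel_measurable borel"
      using \<phi>c by (intro borel_measurable_continuous_onI continuous_at_imp_continuous_on) auto
    have "continuous_on UNIV (\<lambda>z. \<phi> (p z))"
      using \<phi>c pc by (intro continuous_on_compose2[OF _ pc, of UNIV]) (auto intro: continuous_at_imp_continuous_on)
    moreover have "bounded (range (\<lambda>z. \<phi> (p z)))"
      using \<phi>b by (intro boundedI[of _ 1]) auto
    ultimately have "(\<lambda>n. \<integral>z. \<phi> (p z) \<partial>\<mu> n) \<longlonglongrightarrow> (\<integral>z. \<phi> (p z) \<partial>L)"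
      using wc unfolding weak_conv_def by blast
    moreover have "(\<integral>z. \<phi> (p z) \<partial>\<mu> n) = integral\<^sup>L (distr (\<mu> n) borel p) \<phi>" for n
      by (rule integral_distr[symmetric, OF pmn \<phi>m])
    moreover have "(\<integral>z. \<phi> (p z) \<partial>L) = integral\<^sup>L F1 \<phi>"
      unfolding F[symmetric] by (rule integral_distr[symmetric, OF pmL \<phi>m])
    ultimately show "(\<lambda>n. integral\<^sup>L (distr (\<mu> n) borel p) \<phi>) \<longlonglongrightarrow> integral\<^sup>L F1 \<phi>" by simp
  qed
  then have "(\<lambda>n. cdf (distr (\<mu> n) borel p) x) \<longlonglongrightarrow> cdf F1 x"
    using c unfolding Weak_Convergence.weak_conv_m_def Weak_Convergence.weak_conv_def by blast
  moreover have "cdf (distr (\<mu> n) borel p) x = measure (\<mu> n) {z. p z \<le> x}" for n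
  proof -
    have sp: "space (\<mu> n) = UNIV" using sets_eq_imp_space_eq[OF \<mu>s[of n]] by simp
    show ?thesis unfolding cdf_def2 using pmn
      by (subst measure_distr) (auto simp: sp vimage_def)
  qed
  ultimately show ?thesis by simp
qed

lemma nz0: fixes z :: "nat \<Rightarrow> real"
  assumes lim: "(\<lambda>n. real n * z n) \<longlonglongrightarrow> l" shows "z \<longlonglongrightarrow> 0"
proof -
  have "(\<lambda>n. (real n * z n) * inverse (real n)) \<longlonglongrightarrow> l * 0"
    by (intro tendsto_intros lim tendsto_inverse_0_at_top filterlim_real_sequentially)
  moreover have "eventually (\<lambda>n. (real n * z n) * inverse (real n) = z n) sequentially"
    using eventually_gt_at_top[of 0] by eventually_elim simp
  ultimately show ?thesis using Lim_transform_eventually by fastforce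
qed

locale mainloc =
  fixes M :: "'a measure" and f g :: "'a \<Rightarrow> real" and P :: "'w measure"
    and X Y :: "nat \<Rightarrow> 'w \<Rightarrow> real" and \<kappa>p \<kappa>m :: "nat \<Rightarrow> real" and ap am :: real
  assumes f_meas: "f \<in> borel_measurable M" and g_meas: "g \<in> borel_measurable M"
    and f_nn: "\<And>s. f s \<ge> 0" and g_nn: "\<And>s. g s \<ge> 0"
    and f_int: "(\<integral>\<^sup>+ s. ennreal (f s) \<partial>M) = 1"
    and g_int: "(\<integral>\<^sup>+ s. ennreal (g s) \<partial>M) = 1"
    and P_prob: "prob_space P"
    and X_rv: "\<And>i. i \<ge> 1 \<Longrightarrow> X i \<in> borel_measurable P"
    and Y_rv: "\<And>i. i \<ge> 1 \<Longrightarrow> Y i \<in> borel_measurable P"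
    and XY_cdf: "\<And>i x y. i \<ge> 1 \<Longrightarrow> x > 0 \<Longrightarrow> y > 0 \<Longrightarrow>
        measure P {w \<in> space P. X i w \<le> x \<and> Y i w \<le> y}
          = exp (- (\<integral>s. max (f s / x) (g s / y) \<partial>M))"
    and XY_indep: "prob_space.indep_vars P (\<lambda>_. borel) (\<lambda>i w. (X i w, Y i w)) {1..}"
    and \<kappa>p_equiv: "\<kappa>p \<sim>[sequentially] (\<lambda>n. geninv (\<lambda>t. 1 / gamma_plus M f g t) (real n))"
    and \<kappa>m_equiv: "\<kappa>m \<sim>[sequentially] (\<lambda>n. geninv (\<lambda>t. 1 / gamma_minus M f g t) (real n))"
    and ap_pos: "ap > 0" and am_pos: "am > 0"
begin

interpretation prob_space P by (rule P_prob)

lemma S1: "side M f g P X Y"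
  unfolding side_def side_axioms_def ana_def
  using f_meas g_meas f_nn g_nn f_int g_int P_prob X_rv Y_rv XY_cdf XY_indep by auto

lemma S2: "side M g f P Y X"
proof -
  have ind: "indep_vars (\<lambda>_. borel) (\<lambda>i w. (\<lambda>z. (snd z, fst z)) (X i w, Y i w)) {1..}"
  proof (rule indep_vars_compose2[OF XY_indep])
    fix i :: nat
    show "(\<lambda>z. (snd z, fst z)) \<in> measurable borel (borel :: (real \<times> real) measure)"
      by (intro borel_measurable_continuous_onI continuous_intros)
  qed
  show ?thesis
    unfolding side_def side_axioms_def ana_def
    using f_meas g_meas f_nn g_nn f_int g_int P_prob X_rv Y_rv XY_cdf ind
    by (auto simp: max.commute conj_commute)
qed

interpretation s1: side M f g P X Y by (rule S1)
interpretation s2: side M g f P Y X by (rule S2)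

definition Z :: "nat \<Rightarrow> 'w \<Rightarrow> real \<times> real" where
  "Z n w = (Max ((\<lambda>i. X i w / Y i w) ` {1..n}) / \<kappa>p n, Max ((\<lambda>i. Y i w / X i w) ` {1..n}) / \<kappa>m n)"

definition \<mu> :: "nat \<Rightarrow> (real \<times> real) measure" where "\<mu> n = distr P borel (Z n)"

abbreviation "L \<equiv> frechet ap \<Otimes>\<^sub>M frechet am"

lemma Z_alt: "Z n w = (s1.MaxA n w / \<kappa>p n, s2.MaxA n w / \<kappa>m n)"
  by (simp add: Z_def s1.MaxA_def s2.MaxA_def)

lemma Zm: "Z n \<in> borel_measurable P"
  unfolding Z_alt[abs_def] using s1.MaxA_meas s2.MaxA_meas by measurable

lemma \<mu>p: "prob_space (\<mu> n)" unfolding \<mu>_def by (rule prob_space_distr[OF Zm])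
lemma \<mu>s: "sets (\<mu> n) = sets borel" by (simp add: \<mu>_def)

lemma \<mu>_meas: "A \<in> sets borel \<Longrightarrow> measure (\<mu> n) A = prob {w \<in> space P. Z n w \<in> A}"
  unfolding \<mu>_def by (subst measure_distr[OF Zm]) (auto simp: vimage_def Int_def conj_commute)

lemma \<mu>cdf: "measure (\<mu> n) ({..x} \<times> {..y}) = prob {w \<in> space P. s1.MaxA n w / \<kappa>p n \<le> x \<and> s2.MaxA n w / \<kappa>m n \<le> y}"
  by (subst \<mu>_meas) (auto intro: borel_times simp: Z_alt)

lemma fst_set: "{z::real \<times> real. fst z \<le> y} \<in> sets borel"
proof -
  have "{z::real \<times> real. fst z \<le> y} = {..y} \<times> UNIV" by auto
  then show ?thesis using borel_times[of "{..y}" UNIV] by simp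
qed

lemma snd_set: "{z::real \<times> real. snd z \<le> y} \<in> sets borel"
proof -
  have "{z::real \<times> real. snd z \<le> y} = UNIV \<times> {..y}" by auto
  then show ?thesis using borel_times[of UNIV "{..y}"] by simp
qed

lemma Lp: "prob_space L" and Ls: "sets L = sets borel"
  using frechet_pair[OF ap_pos am_pos] by auto

lemma bwd: assumes wc: "weak_conv \<mu> L"
  shows "regvar (gamma_plus M f g) (-ap)" "regvar (gamma_minus M f g) (-am)"
proof -
  interpret FA: real_distribution "frechet ap" by (rule frechet_real_dist[OF ap_pos])
  interpret FB: real_distribution "frechet am" by (rule frechet_real_dist[OF am_pos])
  have F1: "distr L borel fst = frechet ap"
  proof -
    have "distr L borel fst = distr L (frechet ap) fst"
      by (rule distr_cong) (simp_all add: frechet_sets[OF ap_pos])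
    also have "\<dots> = frechet ap" by (rule FB.distr_pair_fst)
    finally show ?thesis .
  qed
  have F2: "distr L borel snd = frechet am"
  proof -
    have "distr L borel snd = distr L (frechet am) snd"
      by (rule distr_cong) (simp_all add: frechet_sets[OF am_pos])
    also have "\<dots> = frechet am" by (rule distr_pair_snd') unfold_locales
    finally show ?thesis .
  qed
  have cdfA: "cdf (frechet ap) = frechet_cdf ap" by (rule ext) (simp add: cdf_def2 frechet_Iic[OF ap_pos])
  have cdfB: "cdf (frechet am) = frechet_cdf am" by (rule ext) (simp add: cdf_def2 frechet_Iic[OF am_pos])
  have m1: "(\<lambda>n. prob {w \<in> space P. s1.MaxA n w / \<kappa>p n \<le> y}) \<longlonglongrightarrow> exp (- (y powr (-ap)))" if y: "y > 0" for y
  proof -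
    have "(\<lambda>n. measure (\<mu> n) {z. fst z \<le> y}) \<longlonglongrightarrow> cdf (frechet ap) y"
      by (rule marg_weak[OF wc \<mu>p \<mu>s Lp Ls _ F1 frechet_real_dist[OF ap_pos]])
         (auto simp: cdfA intro: continuous_intros frechet_cont_pos[OF ap_pos y])
    moreover have "measure (\<mu> n) {z. fst z \<le> y} = prob {w \<in> space P. s1.MaxA n w / \<kappa>p n \<le> y}" for n
      by (subst \<mu>_meas[OF fst_set]) (auto simp: Z_alt)
    ultimately show ?thesis using y by (simp add: cdfA frechet_cdf_def)
  qed
  have m2: "(\<lambda>n. prob {w \<in> space P. s2.MaxA n w / \<kappa>m n \<le> y}) \<longlonglongrightarrow> exp (- (y powr (-am)))" if y: "y > 0" for y
  proof -
    have "(\<lambda>n. measure (\<mu> n) {z. snd z \<le> y}) \<longlonglongrightarrow> cdf (frechet am) y"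
      by (rule marg_weak[OF wc \<mu>p \<mu>s Lp Ls _ F2 frechet_real_dist[OF am_pos]])
         (auto simp: cdfB intro: continuous_intros frechet_cont_pos[OF am_pos y])
    moreover have "measure (\<mu> n) {z. snd z \<le> y} = prob {w \<in> space P. s2.MaxA n w / \<kappa>m n \<le> y}" for n
      by (subst \<mu>_meas[OF snd_set]) (auto simp: Z_alt)
    ultimately show ?thesis using y by (simp add: cdfB frechet_cdf_def)
  qed
  show "regvar (gamma_plus M f g) (-ap)" by (rule s1.side_bwd[OF ap_pos m1])
  have "regvar (gamma_plus M g f) (-am)" by (rule s2.side_bwd[OF am_pos m2])
  then show "regvar (gamma_minus M f g) (-am)" by (simp add: gamma_minus_swap)
qed

lemma ratio_set: "{z :: real \<times> real. fst z / snd z \<le> c \<and> snd z / fst z \<le> d} \<in> sets borel"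
proof -
  have f1: "(\<lambda>z::real \<times> real. fst z / snd z) \<in> borel_measurable borel"
    by (intro borel_measurable_divide borel_measurable_continuous_onI continuous_intros)
  have f2: "(\<lambda>z::real \<times> real. snd z / fst z) \<in> borel_measurable borel"
    by (intro borel_measurable_divide borel_measurable_continuous_onI continuous_intros)
  have "{z :: real \<times> real. fst z / snd z \<le> c \<and> snd z / fst z \<le> d} =
      ((\<lambda>z::real \<times> real. fst z / snd z) -` {..c} \<inter> space borel) \<inter> ((\<lambda>z::real \<times> real. snd z / fst z) -` {..d} \<inter> space borel)"
    by auto
  then show ?thesis using measurable_sets[OF f1, of "{..c}"] measurable_sets[OF f2, of "{..d}"] by auto
qed

lemma joint:
  assumes n: "n \<ge> 1" and kp: "\<kappa>p n > 0" and km: "\<kappa>m n > 0" and c: "\<kappa>p n * x \<ge> 1" and d: "\<kappa>m n * y \<ge> 1"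
  shows "prob {w \<in> space P. s1.MaxA n w / \<kappa>p n \<le> x \<and> s2.MaxA n w / \<kappa>m n \<le> y}
       = (\<Prod>i\<in>{1..n}. 1 - s1.pp i (\<kappa>p n * x) - s2.pp i (\<kappa>m n * y))"
proof -
  define T where "T = {z :: real \<times> real. fst z / snd z \<le> \<kappa>p n * x \<and> snd z / fst z \<le> \<kappa>m n * y}"
  have Tm: "T \<in> sets borel" unfolding T_def by (rule ratio_set)
  have "{w \<in> space P. s1.MaxA n w / \<kappa>p n \<le> x \<and> s2.MaxA n w / \<kappa>m n \<le> y} = (\<Inter>i\<in>{1..n}. {w \<in> space P. (X i w, Y i w) \<in> T})"
    using n kp km by (auto simp: s1.MaxA_def s2.MaxA_def T_def pos_divide_le_eq mult.commute)
  moreover have "prob {w \<in> space P. (X i w, Y i w) \<in> T} = 1 - s1.pp i (\<kappa>p n * x) - s2.pp i (\<kappa>m n * y)" if i: "i \<ge> 1" for i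
  proof -
    define E1 where "E1 = {w \<in> space P. X i w / Y i w > \<kappa>p n * x}"
    define E2 where "E2 = {w \<in> space P. Y i w / X i w > \<kappa>m n * y}"
    have E1m: "E1 \<in> events" unfolding E1_def using s1.ratio_meas[OF i] by measurable
    have E2m: "E2 \<in> events" unfolding E2_def using s2.ratio_meas[OF i] by measurable
    have disj: "E1 \<inter> E2 = {}"
    proof (rule ccontr)
      assume "E1 \<inter> E2 \<noteq> {}"
      then obtain w where w: "X i w / Y i w > \<kappa>p n * x" "Y i w / X i w > \<kappa>m n * y" by (auto simp: E1_def E2_def)
      have r1: "X i w / Y i w > 1" using w(1) c by linarith
      have "inverse (X i w / Y i w) < 1" using r1 by (simp only: inverse_less_1_iff) simp
      moreover have "Y i w / X i w = inverse (X i w / Y i w)" by simp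
      ultimately show False using w(2) d by linarith
    qed
    have "{w \<in> space P. (X i w, Y i w) \<in> T} = space P - (E1 \<union> E2)"
      by (auto simp: T_def E1_def E2_def not_less)
    then have "prob {w \<in> space P. (X i w, Y i w) \<in> T} = 1 - prob (E1 \<union> E2)"
      using E1m E2m by (simp add: prob_compl)
    also have "prob (E1 \<union> E2) = prob E1 + prob E2" by (rule finite_measure_Union[OF E1m E2m disj])
    finally show ?thesis by (simp add: E1_def E2_def s1.pp_def s2.pp_def)
  qed
  ultimately show ?thesis using s1.indep_prod[OF n Tm] by simp
qed

lemma fwd: assumes rv1: "regvar (gamma_plus M f g) (-ap)" and rv2: "regvar (gamma_minus M f g) (-am)"
  shows "weak_conv \<mu> L"
proof -
  have rv2': "regvar (gamma_plus M g f) (-am)" using rv2 by (simp add: gamma_minus_swap)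
  have eq2: "\<kappa>m \<sim>[sequentially] (\<lambda>n. geninv (\<lambda>t. 1 / gamma_plus M g f t) (real n))"
    using \<kappa>m_equiv by (simp add: gamma_minus_swap)
  note F1 = s1.side_fwd[OF ap_pos rv1 \<kappa>p_equiv]
  note F2 = s2.side_fwd[OF am_pos rv2' eq2]
  have kpp: "eventually (\<lambda>n. \<kappa>p n > 0) sequentially" using F1(1) by (simp add: filterlim_at_top_dense)
  have kmp: "eventually (\<lambda>n. \<kappa>m n > 0) sequentially" using F2(1) by (simp add: filterlim_at_top_dense)
  show ?thesis
  proof (rule weak_conv_2d[OF \<mu>p \<mu>s Lp Ls])
    fix x y :: real
    have Lval: "measure L ({..x} \<times> {..y}) = frechet_cdf ap x * frechet_cdf am y"
      by (rule frechet_pair(3)[OF ap_pos am_pos])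
    show "(\<lambda>n. measure (\<mu> n) ({..x} \<times> {..y})) \<longlonglongrightarrow> measure L ({..x} \<times> {..y})"
    proof (cases "x > 0 \<and> y > 0")
      case False
      then have L0: "measure L ({..x} \<times> {..y}) = 0" using Lval by (auto simp: frechet_cdf_def)
      have "eventually (\<lambda>n. measure (\<mu> n) ({..x} \<times> {..y}) = 0) sequentially"
        using kpp kmp eventually_ge_at_top[of 1]
      proof eventually_elim
        case (elim n)
        note en = elim
        have r1: "AE w in P. X 1 w / Y 1 w > 0" by (rule s1.ratio_pos) simp
        have r2: "AE w in P. Y 1 w / X 1 w > 0" by (rule s2.ratio_pos) simp
        have "AE w in P. \<not> (s1.MaxA n w / \<kappa>p n \<le> x \<and> s2.MaxA n w / \<kappa>m n \<le> y)"
          using r1 r2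
        proof eventually_elim
          case (elim w)
          have "X 1 w / Y 1 w \<le> s1.MaxA n w" unfolding s1.MaxA_def using en by (intro Max_ge) auto
          then have a1: "s1.MaxA n w / \<kappa>p n > 0" using elim en by auto
          have "Y 1 w / X 1 w \<le> s2.MaxA n w" unfolding s2.MaxA_def using en by (intro Max_ge) auto
          then have a2: "s2.MaxA n w / \<kappa>m n > 0" using elim en by auto
          show ?case using a1 a2 False by auto
        qed
        then have "prob {w \<in> space P. s1.MaxA n w / \<kappa>p n \<le> x \<and> s2.MaxA n w / \<kappa>m n \<le> y} = 0"
          by (subst prob_Collect_eq_0) (auto intro: s1.MaxA_meas s2.MaxA_meas)
        then show ?case by (simp add: \<mu>cdf)
      qed
      then show ?thesis using L0 by (simp add: tendsto_eventually)
    next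
      case True
      then have x: "x > 0" and y: "y > 0" by auto
      define z1 where "z1 q n = (\<kappa>p n * x) * gamma_plus M f g (q * (\<kappa>p n * x)) / s1.CC (\<kappa>p n * x)" for q n
      define w1 where "w1 q n = (\<kappa>p n * x) * gamma_plus M f g ((\<kappa>p n * x) / q) / s1.CC (\<kappa>p n * x)" for q n
      define z2 where "z2 q n = (\<kappa>m n * y) * gamma_plus M g f (q * (\<kappa>m n * y)) / s2.CC (\<kappa>m n * y)" for q n
      define w2 where "w2 q n = (\<kappa>m n * y) * gamma_plus M g f ((\<kappa>m n * y) / q) / s2.CC (\<kappa>m n * y)" for q n
      have target: "measure L ({..x} \<times> {..y}) = exp (- (x powr (-ap) + y powr (-am)))"
        using Lval x y by (simp add: frechet_cdf_def exp_add[symmetric])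
      show ?thesis unfolding target
      proof (rule squeeze_q[where lo = "\<lambda>q n. (1 - (w1 q n + w2 q n)) ^ n" and hi = "\<lambda>q n. (1 - (z1 q n + z2 q n)) ^ n"
          and A = "\<lambda>q. exp (- ((x / q) powr (-ap) + (y / q) powr (-am)))"
          and B = "\<lambda>q. exp (- ((q * x) powr (-ap) + (q * y) powr (-am)))"])
        fix q :: real assume q: "q > 1"
        have nz: "(\<lambda>n. real n * (z1 q n + z2 q n)) \<longlonglongrightarrow> (q * x) powr (-ap) + (q * y) powr (-am)"
          using tendsto_add[OF F1(2)[OF x q] F2(2)[OF y q]] by (simp add: z1_def z2_def distrib_left)
        have nw: "(\<lambda>n. real n * (w1 q n + w2 q n)) \<longlonglongrightarrow> (x / q) powr (-ap) + (y / q) powr (-am)"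
          using tendsto_add[OF F1(3)[OF x q] F2(3)[OF y q]] by (simp add: w1_def w2_def distrib_left)
        have nn1: "eventually (\<lambda>n. 0 \<le> z1 q n + z2 q n) sequentially"
          using kpp kmp
        proof eventually_elim
          case (elim n)
          have p: "\<kappa>p n * x > 0" "\<kappa>m n * y > 0" using elim x y by auto
          have "z1 q n \<ge> 0" unfolding z1_def using p s1.G_nn[of "q * (\<kappa>p n * x)"] s1.CCpos[OF p(1)] q by simp
          moreover have "z2 q n \<ge> 0" unfolding z2_def using p s2.G_nn[of "q * (\<kappa>m n * y)"] s2.CCpos[OF p(2)] q by simp
          ultimately show ?case by simp
        qed
        have nn2: "eventually (\<lambda>n. 0 \<le> w1 q n + w2 q n) sequentially"
          using kpp kmp
        proof eventually_elim
          case (elim n)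
          have p: "\<kappa>p n * x > 0" "\<kappa>m n * y > 0" using elim x y by auto
          have "w1 q n \<ge> 0" unfolding w1_def using p s1.G_nn[of "(\<kappa>p n * x) / q"] s1.CCpos[OF p(1)] q by simp
          moreover have "w2 q n \<ge> 0" unfolding w2_def using p s2.G_nn[of "(\<kappa>m n * y) / q"] s2.CCpos[OF p(2)] q by simp
          ultimately show ?case by simp
        qed
        show "(\<lambda>n. (1 - (z1 q n + z2 q n)) ^ n) \<longlonglongrightarrow> exp (- ((q * x) powr (-ap) + (q * y) powr (-am)))"
          by (rule pow_lim[OF nz nn1])
        show "(\<lambda>n. (1 - (w1 q n + w2 q n)) ^ n) \<longlonglongrightarrow> exp (- ((x / q) powr (-ap) + (y / q) powr (-am)))"
          by (rule pow_lim[OF nw nn2])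
        have w0: "eventually (\<lambda>n. w1 q n + w2 q n < 1) sequentially"
          using nz0[OF nw] by (intro order_tendstoD(2)) auto
        have c1: "eventually (\<lambda>n. 1 \<le> \<kappa>p n * x) sequentially"
          using s1.kc_top[OF F1(1) x] by (simp add: filterlim_at_top)
        have c2: "eventually (\<lambda>n. 1 \<le> \<kappa>m n * y) sequentially"
          using s2.kc_top[OF F2(1) y] by (simp add: filterlim_at_top)
        show "eventually (\<lambda>n. (1 - (w1 q n + w2 q n)) ^ n \<le> measure (\<mu> n) ({..x} \<times> {..y}) \<and>
                measure (\<mu> n) ({..x} \<times> {..y}) \<le> (1 - (z1 q n + z2 q n)) ^ n) sequentially"
          using kpp kmp eventually_ge_at_top[of 1] w0 c1 c2
        proof eventually_elim
          case (elim n)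
          have n1: "n \<ge> 1" using elim by simp
          have p: "\<kappa>p n * x > 0" "\<kappa>m n * y > 0" using elim x y by auto
          have u: "measure (\<mu> n) ({..x} \<times> {..y}) = (\<Prod>i\<in>{1..n}. 1 - s1.pp i (\<kappa>p n * x) - s2.pp i (\<kappa>m n * y))"
            unfolding \<mu>cdf using elim by (intro joint) auto
          have b: "1 - (w1 q n + w2 q n) \<le> 1 - s1.pp i (\<kappa>p n * x) - s2.pp i (\<kappa>m n * y) \<and>
                   1 - s1.pp i (\<kappa>p n * x) - s2.pp i (\<kappa>m n * y) \<le> 1 - (z1 q n + z2 q n)" if i: "i \<in> {1..n}" for i
          proof -
            have i1: "i \<ge> 1" using i by simp
            note b1 = s1.pp_bounds[OF i1 p(1) q]
            note b2 = s2.pp_bounds[OF i1 p(2) q]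
            show ?thesis using b1 b2 by (simp add: z1_def z2_def w1_def w2_def)
          qed
          have "(1 - (w1 q n + w2 q n)) ^ n = (\<Prod>i\<in>{1..n}. 1 - (w1 q n + w2 q n))" by simp
          also have "\<dots> \<le> (\<Prod>i\<in>{1..n}. 1 - s1.pp i (\<kappa>p n * x) - s2.pp i (\<kappa>m n * y))"
            by (intro prod_mono) (use b elim in auto)
          finally have lo: "(1 - (w1 q n + w2 q n)) ^ n \<le> measure (\<mu> n) ({..x} \<times> {..y})" using u by simp
          have "(\<Prod>i\<in>{1..n}. 1 - s1.pp i (\<kappa>p n * x) - s2.pp i (\<kappa>m n * y)) \<le> (\<Prod>i\<in>{1..n}. 1 - (z1 q n + z2 q n))"
          proof (intro prod_mono conjI)
            fix i assume i: "i \<in> {1..n}"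
            show "0 \<le> 1 - s1.pp i (\<kappa>p n * x) - s2.pp i (\<kappa>m n * y)" using b[OF i] elim by linarith
            show "1 - s1.pp i (\<kappa>p n * x) - s2.pp i (\<kappa>m n * y) \<le> 1 - (z1 q n + z2 q n)" using b[OF i] by simp
          qed
          also have "\<dots> = (1 - (z1 q n + z2 q n)) ^ n" by simp
          finally have hi: "measure (\<mu> n) ({..x} \<times> {..y}) \<le> (1 - (z1 q n + z2 q n)) ^ n" using u by simp
          show ?case using lo hi by simp
        qed
      next
        have "((\<lambda>q. exp (- ((x / q) powr (-ap) + (y / q) powr (-am)))) \<longlongrightarrow> exp (- (x powr (-ap) + y powr (-am)))) (at_right 1)"
          by (intro tendsto_intros tendsto_at_right_1_powr x y)
        then show "((\<lambda>q. exp (- ((x / q) powr (-ap) + (y / q) powr (-am)))) \<longlongrightarrow> exp (- (x powr (-ap) + y powr (-am)))) (at_right 1)" .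
      next
        show "((\<lambda>q. exp (- ((q * x) powr (-ap) + (q * y) powr (-am)))) \<longlongrightarrow> exp (- (x powr (-ap) + y powr (-am)))) (at_right 1)"
          by (intro tendsto_intros tendsto_at_right_1_powr x y)
      qed
    qed
  qed
qed

end

theorem theorem2:
  fixes M :: "'a::polish_space measure"
    and f g :: "'a \<Rightarrow> real"
    and P :: "'w measure"
    and X Y :: "nat \<Rightarrow> 'w \<Rightarrow> real"
    and \<kappa>p \<kappa>m :: "nat \<Rightarrow> real"
    and ap am :: real
  assumes M_borel: "sets M = sets borel"
    and M_sf: "sigma_finite_measure M"
    and f_meas: "f \<in> borel_measurable M" and g_meas: "g \<in> borel_measurable M"
    and f_nn: "\<And>s. f s \<ge> 0" and g_nn: "\<And>s. g s \<ge> 0"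
    and f_int: "(\<integral>\<^sup>+ s. ennreal (f s) \<partial>M) = 1"
    and g_int: "(\<integral>\<^sup>+ s. ennreal (g s) \<partial>M) = 1"
    and P_prob: "prob_space P"
    and X_rv: "\<And>i. i \<ge> 1 \<Longrightarrow> X i \<in> borel_measurable P"
    and Y_rv: "\<And>i. i \<ge> 1 \<Longrightarrow> Y i \<in> borel_measurable P"
    and XY_cdf: "\<And>i x y. i \<ge> 1 \<Longrightarrow> x > 0 \<Longrightarrow> y > 0 \<Longrightarrow>
        measure P {w \<in> space P. X i w \<le> x \<and> Y i w \<le> y}
          = exp (- (\<integral>s. max (f s / x) (g s / y) \<partial>M))"
    and XY_indep: "prob_space.indep_vars P (\<lambda>_. borel) (\<lambda>i w. (X i w, Y i w)) {1..}"
    and E_pos: "\<And>t. t > 0 \<Longrightarrow> emeasure M {s \<in> space M. \<not> (f s \<le> t * g s)} > 0"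
    and D_pos: "\<And>t. t > 0 \<Longrightarrow> emeasure M {s \<in> space M. f s \<le> t * g s} > 0"
    and \<kappa>p_equiv: "\<kappa>p \<sim>[sequentially] (\<lambda>n. geninv (\<lambda>t. 1 / gamma_plus M f g t) (real n))"
    and \<kappa>m_equiv: "\<kappa>m \<sim>[sequentially] (\<lambda>n. geninv (\<lambda>t. 1 / gamma_minus M f g t) (real n))"
    and ap_pos: "ap > 0" and am_pos: "am > 0"
  shows "(regvar (gamma_plus M f g) (- ap) \<and> regvar (gamma_minus M f g) (- am)) \<longleftrightarrow>
         weak_conv
           (\<lambda>n. distr P borel (\<lambda>w. (Max ((\<lambda>i. X i w / Y i w) ` {1..n}) / \<kappa>p n,
                                     Max ((\<lambda>i. Y i w / X i w) ` {1..n}) / \<kappa>m n)))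
           (frechet ap \<Otimes>\<^sub>M frechet am)"
  proof -
  interpret mainloc M f g P X Y \<kappa>p \<kappa>m ap am
    by (rule mainloc.intro) (use f_meas g_meas f_nn g_nn f_int g_int P_prob X_rv Y_rv XY_cdf XY_indep
        \<kappa>p_equiv \<kappa>m_equiv ap_pos am_pos in auto)
  have Zeq: "(\<lambda>n. distr P borel (\<lambda>w. (Max ((\<lambda>i. X i w / Y i w) ` {1..n}) / \<kappa>p n,
                                     Max ((\<lambda>i. Y i w / X i w) ` {1..n}) / \<kappa>m n))) = \<mu>"
    by (intro ext) (simp add: \<mu>_def Z_def[abs_def])
  show ?thesis unfolding Zeq using fwd bwd by blast
qed

end
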